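(* Let $\gamma\in\mathrm{SL}_2(\mathbb{Z})$ and $k\ge1$. If $\operatorname{tr}(\gamma)\neq\pm2$ and $\gamma^k\neq\mathrm{Id}_2$, then \[ c_k(\gamma)=\frac1k\sum_{d\mid k}\phi\!\left(\frac kd\right)\bigl|\operatorname{tr}(\gamma^d)-2\bigr|, \] where $\phi$ is Euler's totient function. Otherwise, \[ c_k(\gamma)=\begin{cases} 1,&\text{if }\gamma^k=\mathrm{Id}_2,\\ |m|k,&\text{if }\gamma\text{ is conjugate in }\mathrm{SL}_2(\mathbb{Z})\text{ to }T^m,\ m\neq0,\\ |m|\tfrac k2+1,&\text{if }\gamma\text{ is conjugate to }-T^m,\ m\neq0,\text{ and }k\text{ is even},\\ 4,&\text{if }\gamma\text{ is conjugate to }-T^m\text{ and }k\text{ is odd}, \end{cases} \] where $T=\begin{pmatrix}1&1\\0&1\end{pmatrix}$.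
   Context: Identify $\mathbb{Z}^{\oplus k}\otimes\mathbb{Z}^{\oplus2}\cong\mathbb{Z}^{2k}$ with coordinates $(j_1,\ell_1,\dots,j_k,\ell_k)$; for $w\in S_k$ and $\gamma\in\mathrm{SL}_2(\mathbb{Z})$, $w\otimes\gamma$ acts by permuting the pairs $(j_i,\ell_i)$ according to $w$ and applying $\gamma$ to each pair. $c_k(\gamma)$ denotes the number of orbits of the cyclic group $\langle(1\,2\cdots k)\rangle\subset S_k$ (acting through its action on $\mathbb{Z}^{2k}$) on the finite set $\operatorname{coker}(\mathrm{Id}_{2k}-(1\,2\cdots k)\otimes\gamma)_{\mathrm{tors}}$, the torsion subgroup of the cokernel. *)

theory Defs
  imports "HOL-Analysis.Analysis" "HOL-Number_Theory.Number_Theory"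
begin

type_synonym imat2 = "int^2^2"

text \<open>Natural-number powers of a 2x2 integer matrix.\<close>
primrec mat_pow :: "imat2 \<Rightarrow> nat \<Rightarrow> imat2" where
  "mat_pow g 0 = mat 1"
| "mat_pow g (Suc n) = g ** mat_pow g n"

definition SL2Z :: "imat2 set" where
  "SL2Z = {g. det g = 1}"

text \<open>T^m = [[1,m],[0,1]] for integer m (T = [[1,1],[0,1]]).\<close>
definition T_pow :: "int \<Rightarrow> imat2" where
  "T_pow m = (\<chi> i j. if i = j then 1 else if i = 1 \<and> j = 2 then m else 0)"

definition conj_SL2Z :: "imat2 \<Rightarrow> imat2 \<Rightarrow> bool" where
  "conj_SL2Z g h \<longleftrightarrow> (\<exists>P Q. P \<in> SL2Z \<and> P ** Q = mat 1 \<and> g = P ** h ** Q)"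

text \<open>Z^n as integer vectors indexed by nat, supported on {0..<n}.
  For Z^{2k}: coordinates (j_i, l_i) = (v (2i), v (2i+1)) for i < k (0-indexed).\<close>
definition zvecs :: "nat \<Rightarrow> (nat \<Rightarrow> int) set" where
  "zvecs n = {v. \<forall>p\<ge>n. v p = 0}"

text \<open>The action of w \<otimes> g on Z^{2k}, where w = (1 2 ... k) is the cyclic
  permutation i \<mapsto> i+1 mod k (0-indexed): pair i is moved to position w(i)
  and g is applied to it (as a column vector).\<close>
definition cyc_tensor :: "nat \<Rightarrow> imat2 \<Rightarrow> (nat \<Rightarrow> int) \<Rightarrow> (nat \<Rightarrow> int)" where
  "cyc_tensor k g v = (\<lambda>p. if p < 2 * k then
      (let i' = (p div 2 + k - 1) mod k; j = v (2 * i'); l = v (2 * i' + 1) in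
        if even p then g $ 1 $ 1 * j + g $ 1 $ 2 * l
        else g $ 2 $ 1 * j + g $ 2 $ 2 * l)
    else 0)"

text \<open>Image lattice of Id - (w \<otimes> g) in Z^{2k}.\<close>
definition img_lattice :: "nat \<Rightarrow> imat2 \<Rightarrow> (nat \<Rightarrow> int) set" where
  "img_lattice k g = (\<lambda>v. v - cyc_tensor k g v) ` zvecs (2 * k)"

text \<open>Class of v in the cokernel Z^{2k} / image.\<close>
definition coker_class :: "nat \<Rightarrow> imat2 \<Rightarrow> (nat \<Rightarrow> int) \<Rightarrow> (nat \<Rightarrow> int) set" where
  "coker_class k g v = {w \<in> zvecs (2 * k). w - v \<in> img_lattice k g}"

text \<open>Torsion subgroup of the cokernel, as a set of classes.\<close>
definition coker_tors :: "nat \<Rightarrow> imat2 \<Rightarrow> (nat \<Rightarrow> int) set set" where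
  "coker_tors k g = {coker_class k g v | v. v \<in> zvecs (2 * k) \<and>
       (\<exists>n::int. n > 0 \<and> (\<lambda>p. n * v p) \<in> img_lattice k g)}"

text \<open>Number of orbits of the cyclic group generated by (1 2 ... k), acting on
  the torsion of the cokernel through its action w \<otimes> Id on Z^{2k}.\<close>
definition c_k :: "nat \<Rightarrow> imat2 \<Rightarrow> nat" where
  "c_k k g = card {{(cyc_tensor k (mat 1) ^^ n) ` C | n. True} | C. C \<in> coker_tors k g}"

end

theory Submission
  imports Defs "HOL-Library.Function_Algebras"
begin

(* ---- from Work.thy ---- *)
section \<open>Generic quotient machinery\<close>

definition cls :: "'a::ab_group_add set \<Rightarrow> 'a set \<Rightarrow> 'a \<Rightarrow> 'a set" where
  "cls V I v = {w \<in> V. w - v \<in> I}"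

definition torsQ :: "'a::ab_group_add set \<Rightarrow> 'a set \<Rightarrow> (int \<Rightarrow> 'a \<Rightarrow> 'a) \<Rightarrow> 'a set set" where
  "torsQ V I sm = {cls V I v | v. v \<in> V \<and> (\<exists>n::int. n > 0 \<and> sm n v \<in> I)}"

definition orbQ :: "('a \<Rightarrow> 'a) \<Rightarrow> 'a set \<Rightarrow> 'a set set" where
  "orbQ S C = {(S ^^ n) ` C | n. True}"

definition ocount :: "'a::ab_group_add set \<Rightarrow> 'a set \<Rightarrow> (int \<Rightarrow> 'a \<Rightarrow> 'a) \<Rightarrow> ('a \<Rightarrow> 'a) \<Rightarrow> nat" where
  "ocount V I sm S = card (orbQ S ` torsQ V I sm)"

definition qsys :: "'a::ab_group_add set \<Rightarrow> 'a set \<Rightarrow> (int \<Rightarrow> 'a \<Rightarrow> 'a) \<Rightarrow> ('a \<Rightarrow> 'a) \<Rightarrow> bool" where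
  "qsys V I sm S \<longleftrightarrow> (\<forall>v\<in>V. \<forall>w\<in>V. v - w \<in> V) \<and> I \<subseteq> V \<and> 0 \<in> I \<and>
     (\<forall>v\<in>I. \<forall>w\<in>I. v - w \<in> I) \<and> bij_betw S V V \<and>
     (\<forall>v\<in>V. \<forall>w\<in>V. S (v - w) = S v - S w) \<and> S ` I = I \<and> (\<forall>n. \<forall>v\<in>V. sm n v \<in> V)"

lemma qsys_sub_I: "qsys V I sm S \<Longrightarrow> v \<in> I \<Longrightarrow> w \<in> I \<Longrightarrow> v - w \<in> I"
  by (simp add: qsys_def)

lemma qsys_minus_I: "qsys V I sm S \<Longrightarrow> v \<in> I \<Longrightarrow> - v \<in> I"
  using qsys_sub_I[of V I sm S 0 v] by (simp add: qsys_def)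

lemma qsys_add_I: "qsys V I sm S \<Longrightarrow> v \<in> I \<Longrightarrow> w \<in> I \<Longrightarrow> v + w \<in> I"
  using qsys_sub_I[of V I sm S v "-w"] qsys_minus_I[of V I sm S w] by simp

lemma cls_eq_iff:
  assumes q: "qsys V I sm S" and v: "v \<in> V" and w: "w \<in> V"
  shows "cls V I v = cls V I w \<longleftrightarrow> v - w \<in> I"
proof
  assume "cls V I v = cls V I w"
  moreover have "v \<in> cls V I v" using v q by (simp add: cls_def qsys_def)
  ultimately show "v - w \<in> I" by (simp add: cls_def)
next
  assume h: "v - w \<in> I"
  show "cls V I v = cls V I w"
  proof (auto simp: cls_def)
    fix x assume "x \<in> V" "x - v \<in> I"
    then have "(x - v) + (v - w) \<in> I" using qsys_add_I[OF q] h by blast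
    then show "x - w \<in> I" by simp
  next
    fix x assume "x \<in> V" "x - w \<in> I"
    then have "(x - w) - (v - w) \<in> I" using qsys_sub_I[OF q] h by blast
    then show "x - v \<in> I" by simp
  qed
qed

lemma qsys_S_cls:
  assumes q: "qsys V I sm S" and v: "v \<in> V"
  shows "S ` cls V I v = cls V I (S v)"
proof -
  have bij: "bij_betw S V V" and add: "\<forall>v\<in>V. \<forall>w\<in>V. S (v - w) = S v - S w"
    and SI: "S ` I = I" and IV: "I \<subseteq> V" using q by (auto simp: qsys_def)
  have sub: "\<And>a b. a \<in> V \<Longrightarrow> b \<in> V \<Longrightarrow> a - b \<in> V" using q by (simp add: qsys_def)
  show ?thesis
  proof (auto simp: cls_def)
    fix x assume "x \<in> V" then show "S x \<in> V" using bij bij_betwE by blast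
  next
    fix x assume x: "x \<in> V" "x - v \<in> I"
    then have "S (x - v) \<in> I" using SI by blast
    then show "S x - S v \<in> I" using add x v by simp
  next
    fix y assume y: "y \<in> V" "y - S v \<in> I"
    obtain x where x: "x \<in> V" "y = S x" using y bij by (metis bij_betw_imp_surj_on imageE)
    obtain i where i: "i \<in> I" "S i = y - S v" using y SI by (metis imageE)
    have "S i = S (x - v)" using i x add v by simp
    moreover have "i \<in> V" "x - v \<in> V" using i IV sub x v by auto
    ultimately have "i = x - v" using bij by (meson bij_betw_imp_inj_on inj_onD)
    then show "y \<in> S ` {w \<in> V. w - v \<in> I}" using x i by auto
  qed
qed

lemma qsys_Sn_V: "qsys V I sm S \<Longrightarrow> v \<in> V \<Longrightarrow> (S ^^ n) v \<in> V"
  by (induction n) (auto simp: qsys_def bij_betw_def)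

lemma qsys_Sn_cls:
  assumes q: "qsys V I sm S" and v: "v \<in> V"
  shows "(S ^^ n) ` cls V I v = cls V I ((S ^^ n) v)"
proof (induction n)
  case 0 then show ?case by simp
next
  case (Suc n)
  have "(S ^^ Suc n) ` cls V I v = S ` ((S ^^ n) ` cls V I v)" by (simp add: image_comp)
  also have "\<dots> = cls V I ((S ^^ Suc n) v)" using Suc qsys_S_cls[OF q qsys_Sn_V[OF q v]] by simp
  finally show ?case .
qed

lemma ocount_transfer:
  assumes q1: "qsys V1 I1 sm1 S1" and q2: "qsys V2 I2 sm2 S2"
    and Phi_V: "Phi ` V1 = V2"
    and Phi_sub: "\<And>v w. v \<in> V1 \<Longrightarrow> w \<in> V1 \<Longrightarrow> Phi (v - w) = Phi v - Phi w"
    and Phi_sm: "\<And>n v. v \<in> V1 \<Longrightarrow> Phi (sm1 n v) = sm2 n (Phi v)"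
    and Phi_I: "\<And>v. v \<in> V1 \<Longrightarrow> v \<in> I1 \<longleftrightarrow> Phi v \<in> I2"
    and Phi_S: "\<And>v. v \<in> V1 \<Longrightarrow> Phi (S1 v) - S2 (Phi v) \<in> I2"
  shows "ocount V1 I1 sm1 S1 = ocount V2 I2 sm2 S2"
proof -
  define psi where "psi = (\<lambda>C. Phi ` C)"
  define Cl where "Cl = cls V1 I1 ` V1"
  have sub1: "\<And>a b. a \<in> V1 \<Longrightarrow> b \<in> V1 \<Longrightarrow> a - b \<in> V1" using q1 by (simp add: qsys_def)
  have sub2: "\<And>a b. a \<in> V2 \<Longrightarrow> b \<in> V2 \<Longrightarrow> a - b \<in> V2" using q2 by (simp add: qsys_def)
  have I2V: "I2 \<subseteq> V2" using q2 by (simp add: qsys_def)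
  have psi_cls: "psi (cls V1 I1 v) = cls V2 I2 (Phi v)" if v: "v \<in> V1" for v
  proof (auto simp: psi_def cls_def)
    fix w assume "w \<in> V1" "w - v \<in> I1"
    then show "Phi w \<in> V2" "Phi w - Phi v \<in> I2" using Phi_V Phi_I Phi_sub sub1 v by auto
  next
    fix y assume y: "y \<in> V2" "y - Phi v \<in> I2"
    then obtain w where w: "w \<in> V1" "y = Phi w" using Phi_V by auto
    then have "w - v \<in> I1" using Phi_I[of "w - v"] Phi_sub[of w v] sub1 v y by auto
    then show "y \<in> Phi ` {w \<in> V1. w - v \<in> I1}" using w by auto
  qed
  have inj: "inj_on psi Cl"
  proof (rule inj_onI)
    fix C D assume "C \<in> Cl" "D \<in> Cl" and e: "psi C = psi D"
    then obtain v w where vw: "v \<in> V1" "w \<in> V1" "C = cls V1 I1 v" "D = cls V1 I1 w"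
      by (auto simp: Cl_def)
    then have "cls V2 I2 (Phi v) = cls V2 I2 (Phi w)" using e psi_cls by simp
    then have "Phi v - Phi w \<in> I2" using cls_eq_iff[OF q2] vw Phi_V by blast
    then have "v - w \<in> I1" using Phi_I[of "v - w"] Phi_sub vw sub1 by simp
    then show "C = D" using cls_eq_iff[OF q1] vw by blast
  qed
  have PhiSn: "Phi ((S1 ^^ n) v) - (S2 ^^ n) (Phi v) \<in> I2" if v: "v \<in> V1" for v n
  proof (induction n)
    case 0 then show ?case using q2 by (simp add: qsys_def)
  next
    case (Suc n)
    have a: "(S1 ^^ n) v \<in> V1" using qsys_Sn_V[OF q1 v] .
    have b: "(S2 ^^ n) (Phi v) \<in> V2" using qsys_Sn_V[OF q2] Phi_V v by blast
    have c: "Phi ((S1 ^^ n) v) \<in> V2" using a Phi_V by blast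
    have d: "S2 (Phi ((S1 ^^ n) v) - (S2 ^^ n) (Phi v)) \<in> I2"
      using Suc q2 by (auto simp: qsys_def)
    have e: "S2 (Phi ((S1 ^^ n) v) - (S2 ^^ n) (Phi v)) = S2 (Phi ((S1 ^^ n) v)) - S2 ((S2 ^^ n) (Phi v))"
      using q2 b c by (simp add: qsys_def)
    have "Phi ((S1 ^^ Suc n) v) - (S2 ^^ Suc n) (Phi v) =
      (Phi (S1 ((S1 ^^ n) v)) - S2 (Phi ((S1 ^^ n) v))) + S2 (Phi ((S1 ^^ n) v) - (S2 ^^ n) (Phi v))"
      using e by simp
    also have "\<dots> \<in> I2" using qsys_add_I[OF q2 Phi_S[OF a] d] .
    finally show ?case .
  qed
  have orb: "orbQ S2 (psi C) = psi ` orbQ S1 C" if C: "C \<in> Cl" for C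
  proof -
    obtain v where v: "v \<in> V1" "C = cls V1 I1 v" using C by (auto simp: Cl_def)
    have "(S2 ^^ n) ` psi C = psi ((S1 ^^ n) ` C)" for n
    proof -
      have pv: "Phi v \<in> V2" using Phi_V v by blast
      have "(S2 ^^ n) ` psi C = cls V2 I2 ((S2 ^^ n) (Phi v))"
        using psi_cls[OF v(1)] v(2) qsys_Sn_cls[OF q2 pv] by simp
      also have "\<dots> = cls V2 I2 (Phi ((S1 ^^ n) v))"
        using cls_eq_iff[OF q2] PhiSn[OF v(1)] qsys_Sn_V[OF q2] qsys_Sn_V[OF q1] Phi_V v
        by (metis imageI)
      also have "\<dots> = psi ((S1 ^^ n) ` C)"
        using psi_cls qsys_Sn_cls[OF q1] qsys_Sn_V[OF q1] v by simp
      finally show ?thesis .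
    qed
    then show ?thesis by (auto simp: orbQ_def)
  qed
  have orbCl: "orbQ S1 C \<subseteq> Cl" if C: "C \<in> Cl" for C
    using C qsys_Sn_cls[OF q1] qsys_Sn_V[OF q1] by (auto simp: orbQ_def Cl_def)
  have tCl: "torsQ V1 I1 sm1 \<subseteq> Cl" by (auto simp: torsQ_def Cl_def)
  have t2: "torsQ V2 I2 sm2 = psi ` torsQ V1 I1 sm1"
  proof
    show "psi ` torsQ V1 I1 sm1 \<subseteq> torsQ V2 I2 sm2"
    proof
      fix D assume "D \<in> psi ` torsQ V1 I1 sm1"
      then obtain v n where v: "v \<in> V1" "n > 0" "sm1 n v \<in> I1" "D = psi (cls V1 I1 v)"
        by (auto simp: torsQ_def)
      then have "sm2 n (Phi v) \<in> I2" using Phi_I Phi_sm q1 by (simp add: qsys_def)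
      then show "D \<in> torsQ V2 I2 sm2" using v psi_cls Phi_V by (auto simp: torsQ_def)
    qed
  next
    show "torsQ V2 I2 sm2 \<subseteq> psi ` torsQ V1 I1 sm1"
    proof
      fix D assume "D \<in> torsQ V2 I2 sm2"
      then obtain y n where y: "y \<in> V2" "n > 0" "sm2 n y \<in> I2" "D = cls V2 I2 y"
        by (auto simp: torsQ_def)
      then obtain v where v: "v \<in> V1" "y = Phi v" using Phi_V by auto
      then have "sm1 n v \<in> I1" using Phi_I Phi_sm q1 y by (simp add: qsys_def)
      then have "cls V1 I1 v \<in> torsQ V1 I1 sm1" using v y by (auto simp: torsQ_def)
      then show "D \<in> psi ` torsQ V1 I1 sm1" using psi_cls v y by auto
    qed
  qed
  have "orbQ S2 ` torsQ V2 I2 sm2 = (\<lambda>X. psi ` X) ` (orbQ S1 ` torsQ V1 I1 sm1)"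
    unfolding t2 image_image using orb tCl by (auto simp: image_iff)
  moreover have "inj_on (\<lambda>X. psi ` X) (orbQ S1 ` torsQ V1 I1 sm1)"
  proof (rule inj_onI)
    fix X1 X2 assume "X1 \<in> orbQ S1 ` torsQ V1 I1 sm1" "X2 \<in> orbQ S1 ` torsQ V1 I1 sm1"
      and e: "psi ` X1 = psi ` X2"
    then have "X1 \<subseteq> Cl" "X2 \<subseteq> Cl" using orbCl tCl by blast+
    then show "X1 = X2" using inj e by (simp add: inj_on_image_eq_iff)
  qed
  ultimately show ?thesis unfolding ocount_def by (simp add: card_image)
qed

(* ---- from W2.thy ---- *)
lemmas m2 = vec_eq_iff forall_2 matrix_matrix_mult_def matrix_vector_mult_def sum_2 mat_def

definition adj2 :: "imat2 \<Rightarrow> imat2" where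
  "adj2 g = (\<chi> i j. if i = 1 \<and> j = 1 then g$2$2 else if i = 2 \<and> j = 2 then g$1$1
       else - g$i$j)"

lemma adj2_entries [simp]: "adj2 g $1$1 = g$2$2" "adj2 g $2$2 = g$1$1"
  "adj2 g $1$2 = - g$1$2" "adj2 g $2$1 = - g$2$1"
  by (simp_all add: adj2_def)

lemma adj2_right: "g ** adj2 g = mat (det g)"
  by (simp add: m2 det_2 algebra_simps)

lemma adj2_left: "adj2 g ** g = mat (det g)"
  by (simp add: m2 det_2 algebra_simps)

lemma mat_pow_add: "mat_pow g (a + b) = mat_pow g a ** mat_pow g b"
  by (induction a) (auto simp: matrix_mul_assoc)

lemma mat_pow_Suc': "mat_pow g (Suc n) = mat_pow g n ** g"
  using mat_pow_add[of g n 1] by simp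

lemma mat_pow_comm: "mat_pow g a ** mat_pow g b = mat_pow g b ** mat_pow g a"
  by (metis add.commute mat_pow_add)

lemma mat_pow_mult: "mat_pow (mat_pow g a) b = mat_pow g (a * b)"
  by (induction b) (auto simp: mat_pow_add[symmetric] add.commute)

lemma det_mat_pow: "det g = 1 \<Longrightarrow> det (mat_pow g n) = 1"
  by (induction n) (auto simp: det_mul)

lemma mat_pow_conj:
  assumes "Q ** P = mat 1"
  shows "mat_pow (P ** h ** Q) n = (if n = 0 then mat 1 else P ** mat_pow h n ** Q)"
proof (induction n)
  case 0 then show ?case by simp
next
  case (Suc n)
  show ?case
  proof (cases n)
    case 0 then show ?thesis by simp
  next
    case (Suc m)
    have "P ** h ** Q ** (P ** mat_pow h n ** Q) = P ** h ** (Q ** P) ** mat_pow h n ** Q"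
      by (simp add: matrix_mul_assoc)
    then show ?thesis using Suc.IH Suc assms by (simp add: matrix_mul_assoc)
  qed
qed

(* ---- from W3.thy ---- *)
definition mk2 :: "int \<Rightarrow> int \<Rightarrow> int \<Rightarrow> int \<Rightarrow> imat2" where
  "mk2 a b c d = vector [vector [a, b], vector [c, d]]"

lemma mk2_entries [simp]: "mk2 a b c d $1$1 = a" "mk2 a b c d $1$2 = b"
  "mk2 a b c d $2$1 = c" "mk2 a b c d $2$2 = d"
  by (simp_all add: mk2_def)

definition v2 :: "int \<Rightarrow> int \<Rightarrow> int^2" where "v2 a b = vector [a, b]"

lemma v2_entries [simp]: "v2 a b $1 = a" "v2 a b $2 = b"
  by (simp_all add: v2_def)

lemma v2_inj [simp]: "v2 a b = v2 c d \<longleftrightarrow> a = c \<and> b = d"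
  by (auto simp: vec_eq_iff forall_2)

definition latt :: "imat2 \<Rightarrow> (int^2) set" where "latt A = range (\<lambda>x. A *v x)"

definition subgrp :: "'a::ab_group_add set \<Rightarrow> bool" where
  "subgrp L \<longleftrightarrow> 0 \<in> L \<and> (\<forall>a\<in>L. \<forall>b\<in>L. a - b \<in> L)"

lemma subgrp_latt: "subgrp (latt A)"
  unfolding subgrp_def latt_def
proof (intro conjI ballI)
  show "0 \<in> range ((*v) A)" by (metis rangeI matrix_vector_mult_0_right)
next
  fix a b assume "a \<in> range ((*v) A)" "b \<in> range ((*v) A)"
  then show "a - b \<in> range ((*v) A)" by (auto simp: matrix_vector_mult_diff_distrib[symmetric])
qed

lemma subgrp_add: "subgrp L \<Longrightarrow> a \<in> L \<Longrightarrow> b \<in> L \<Longrightarrow> a + b \<in> L"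
  unfolding subgrp_def by (metis diff_0 diff_minus_eq_add)

lemma cls_UNIV_eq_iff:
  assumes "subgrp L" shows "cls UNIV L v = cls UNIV L w \<longleftrightarrow> v - w \<in> L"
proof
  assume "cls UNIV L v = cls UNIV L w"
  moreover have "v \<in> cls UNIV L v" using assms by (simp add: cls_def subgrp_def)
  ultimately show "v - w \<in> L" by (simp add: cls_def)
next
  assume h: "v - w \<in> L"
  show "cls UNIV L v = cls UNIV L w"
  proof (auto simp: cls_def)
    fix x assume "x - v \<in> L"
    then have "(x - v) + (v - w) \<in> L" using subgrp_add[OF assms] h by blast
    then show "x - w \<in> L" by simp
  next
    fix x assume "x - w \<in> L"
    then have "(x - w) - (v - w) \<in> L" using assms h unfolding subgrp_def by blast
    then show "x - v \<in> L" by simp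
  qed
qed

lemma card_cls_repr:
  assumes L: "subgrp L" and R: "R \<subseteq> Y" and ex: "\<And>y. y \<in> Y \<Longrightarrow> \<exists>r\<in>R. y - r \<in> L"
    and un: "\<And>r r'. r \<in> R \<Longrightarrow> r' \<in> R \<Longrightarrow> r - r' \<in> L \<Longrightarrow> r = r'"
  shows "card (cls UNIV L ` Y) = card R"
proof -
  have "cls UNIV L ` Y = cls UNIV L ` R"
  proof
    show "cls UNIV L ` Y \<subseteq> cls UNIV L ` R"
      using ex cls_UNIV_eq_iff[OF L] by blast
    show "cls UNIV L ` R \<subseteq> cls UNIV L ` Y" using R by blast
  qed
  moreover have "inj_on (cls UNIV L) R"
    using un cls_UNIV_eq_iff[OF L] by (auto simp: inj_on_def)
  ultimately show ?thesis by (simp add: card_image)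
qed

lemma hermite:
  fixes D :: imat2
  shows "\<exists>(U::imat2) (U'::imat2). U ** U' = mat 1 \<and> U' ** U = mat 1 \<and> (D ** U)$2$1 = 0"
proof (cases "D$2$1 = 0")
  case True then show ?thesis by (intro exI[of _ "mat 1 :: imat2"]) simp
next
  case False
  define c where "c = D$2$1"
  define d where "d = D$2$2"
  define g where "g = gcd c d"
  have g0: "g \<noteq> 0" using False by (simp add: g_def c_def)
  obtain c' where c': "c = g * c'" unfolding g_def by (meson gcd_dvd1 dvdE)
  obtain d' where d': "d = g * d'" unfolding g_def by (meson gcd_dvd2 dvdE)
  obtain s t where st: "s * c + t * d = g" unfolding g_def using bezout_int by blast
  have "g * (s * c' + t * d') = g * 1" using st c' d' by (simp add: algebra_simps)
  then have st1: "s * c' + t * d' = 1" using g0 mult_left_cancel by blast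
  define U where "U = mk2 d' s (- c') t"
  define U' where "U' = mk2 t (- s) c' d'"
  have "U ** U' = mat 1" "U' ** U = mat 1"
    using st1 by (simp_all add: U_def U'_def m2 algebra_simps)
  moreover have "(D ** U)$2$1 = 0"
    by (simp add: U_def m2 c_def[symmetric] d_def[symmetric] c' d' algebra_simps)
  ultimately show ?thesis by blast
qed

lemma unit_det:
  fixes U U' :: imat2
  assumes "U ** U' = mat 1" shows "\<bar>det U\<bar> = 1"
proof -
  have "det U * det U' = 1" using assms det_mul[of U U'] by simp
  then show ?thesis using zmult_eq_1_iff by (metis abs_1 abs_neg_one)
qed

lemma latt_unit:
  assumes "U ** U' = mat 1" shows "latt (D ** U) = latt D"
  unfolding latt_def
proof (auto simp: matrix_vector_mul_assoc[symmetric])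
  fix x
  have "D *v x = D *v (U *v (U' *v x))" by (simp add: matrix_vector_mul_assoc assms)
  then show "D *v x \<in> range (\<lambda>x. D *v (U *v x))" by blast
qed

lemma box_repr:
  fixes D :: imat2
  assumes "det D \<noteq> 0"
  shows "\<exists>R. finite R \<and> card R = nat \<bar>det D\<bar> \<and> (\<forall>y. \<exists>r\<in>R. y - r \<in> latt D)
           \<and> (\<forall>r\<in>R. \<forall>r'\<in>R. r - r' \<in> latt D \<longrightarrow> r = r')"
proof -
  obtain U U' :: imat2 where U: "U ** U' = mat 1" "U' ** U = mat 1" and H0: "(D ** U)$2$1 = 0"
    using hermite by blast
  define H where "H = D ** U"
  define p where "p = H$1$1"
  define q where "q = H$1$2"
  define s where "s = H$2$2"
  have H0': "H$2$1 = 0" using H0 H_def by simp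
  have dH: "det H = p * s" using H0 by (simp add: H_def[symmetric] det_2 p_def s_def)
  have "\<bar>det H\<bar> = \<bar>det D\<bar>" using unit_det[OF U(1)] by (simp add: H_def det_mul abs_mult)
  then have adet: "\<bar>p * s\<bar> = \<bar>det D\<bar>" using dH by simp
  then have p0: "p \<noteq> 0" and s0: "s \<noteq> 0" using assms by auto
  have LH: "latt H = latt D" using latt_unit[OF U(1)] by (simp add: H_def)
  have Hv: "H *v v2 a b = v2 (p * a + q * b) (s * b)" for a b
    using H0' by (simp add: m2 p_def q_def s_def v2_def)
  define R where "R = (\<lambda>(x, y). v2 x y) ` ({0..<\<bar>p\<bar>} \<times> {0..<\<bar>s\<bar>})"
  have fin: "finite R" by (simp add: R_def)
  have "card R = card ({0..<\<bar>p\<bar>} \<times> {0..<\<bar>s\<bar>})"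
    unfolding R_def by (rule card_image) (auto simp: inj_on_def)
  also have "\<dots> = nat \<bar>p\<bar> * nat \<bar>s\<bar>" by (simp add: card_cartesian_product)
  also have "\<dots> = nat \<bar>det D\<bar>" using adet by (metis abs_ge_zero abs_mult nat_mult_distrib)
  finally have cR: "card R = nat \<bar>det D\<bar>" .
  have ex: "\<exists>r\<in>R. y - r \<in> latt D" for y
  proof -
    define b where "b = (y$2 div \<bar>s\<bar>) * sgn s"
    define r2 where "r2 = y$2 mod \<bar>s\<bar>"
    define x' where "x' = y$1 - q * b"
    define a where "a = (x' div \<bar>p\<bar>) * sgn p"
    define r1 where "r1 = x' mod \<bar>p\<bar>"
    have sb: "s * b = y$2 - r2"
    proof -
      have "s * b = (s * sgn s) * (y$2 div \<bar>s\<bar>)" unfolding b_def by (simp add: algebra_simps)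
      also have "\<dots> = \<bar>s\<bar> * (y$2 div \<bar>s\<bar>)" by (simp add: abs_sgn)
      also have "\<dots> = y$2 - r2" unfolding r2_def by (simp add: minus_mod_eq_mult_div)
      finally show ?thesis .
    qed
    have pa: "p * a = x' - r1"
    proof -
      have "p * a = (p * sgn p) * (x' div \<bar>p\<bar>)" unfolding a_def by (simp add: algebra_simps)
      also have "\<dots> = \<bar>p\<bar> * (x' div \<bar>p\<bar>)" by (simp add: abs_sgn)
      also have "\<dots> = x' - r1" unfolding r1_def by (simp add: minus_mod_eq_mult_div)
      finally show ?thesis .
    qed
    have "y - v2 r1 r2 = H *v v2 a b"
      unfolding Hv using sb pa by (simp add: vec_eq_iff forall_2 x'_def)
    moreover have "v2 r1 r2 \<in> R" unfolding R_def r1_def r2_def using p0 s0 by auto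
    ultimately show ?thesis using LH unfolding latt_def by (metis rangeI)
  qed
  have un: "r = r'" if r: "r \<in> R" "r' \<in> R" "r - r' \<in> latt D" for r r'
  proof -
    obtain x1 y1 x2 y2 where xy: "r = v2 x1 y1" "r' = v2 x2 y2" "0 \<le> x1" "x1 < \<bar>p\<bar>" "0 \<le> y1" "y1 < \<bar>s\<bar>"
      "0 \<le> x2" "x2 < \<bar>p\<bar>" "0 \<le> y2" "y2 < \<bar>s\<bar>" using r(1,2) unfolding R_def by auto
    obtain w where w: "r - r' = H *v w" using r(3) LH unfolding latt_def by auto
    have "w = v2 (w$1) (w$2)" by (simp add: vec_eq_iff forall_2)
    then have w': "r - r' = v2 (p * w$1 + q * w$2) (s * w$2)" using w Hv by metis
    have e2: "y1 - y2 = s * w$2" using w' xy by (simp add: vec_eq_iff forall_2)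
    have "w$2 = 0"
    proof (rule ccontr)
      assume "w$2 \<noteq> 0"
      then have "1 \<le> \<bar>w$2\<bar>" by simp
      then have "\<bar>s\<bar> \<le> \<bar>s * w$2\<bar>" using mult_left_mono[of 1 "\<bar>w$2\<bar>" "\<bar>s\<bar>"] by (simp add: abs_mult)
      then show False using e2 xy by linarith
    qed
    then have e1: "x1 - x2 = p * w$1" using w' xy by (simp add: vec_eq_iff forall_2)
    have "w$1 = 0"
    proof (rule ccontr)
      assume "w$1 \<noteq> 0"
      then have "1 \<le> \<bar>w$1\<bar>" by simp
      then have "\<bar>p\<bar> \<le> \<bar>p * w$1\<bar>" using mult_left_mono[of 1 "\<bar>w$1\<bar>" "\<bar>p\<bar>"] by (simp add: abs_mult)
      then show False using e1 xy by linarith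
    qed
    then show ?thesis using e1 e2 \<open>w$2 = 0\<close> xy by simp
  qed
  show ?thesis using fin cR ex un by blast
qed

(* ---- from W4.thy ---- *)
lemma mat_mulv: "mat c *v x = c *s (x::int^2)"
  by (simp add: m2)

lemma mv_smult: "(A::imat2) *v (c *s x) = c *s (A *v x)"
  by (simp add: m2 algebra_simps)

lemma mat_inj:
  fixes N :: imat2
  assumes "det N \<noteq> 0" "N *v x = N *v y" shows "x = y"
proof -
  have "adj2 N *v (N *v x) = adj2 N *v (N *v y)" using assms by simp
  then have "det N *s x = det N *s y" by (simp add: matrix_vector_mul_assoc adj2_left mat_mulv)
  then show ?thesis using assms(1) by (simp add: vec_eq_iff)
qed

lemma card_latt_quot:
  fixes N D :: imat2
  assumes dD: "det D \<noteq> 0" and dN: "det N \<noteq> 0"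
  shows "card (cls UNIV (latt (N ** D)) ` latt N) = nat \<bar>det D\<bar>"
proof -
  obtain R where R: "finite R" "card R = nat \<bar>det D\<bar>" "\<And>y. \<exists>r\<in>R. y - r \<in> latt D"
     "\<And>r r'. r \<in> R \<Longrightarrow> r' \<in> R \<Longrightarrow> r - r' \<in> latt D \<Longrightarrow> r = r'"
    using box_repr[OF dD] by blast
  define R' where "R' = (\<lambda>x. N *v x) ` R"
  have "card R' = card R" unfolding R'_def
    by (rule card_image) (meson inj_onI mat_inj dN)
  moreover have "card (cls UNIV (latt (N ** D)) ` latt N) = card R'"
  proof (rule card_cls_repr[OF subgrp_latt])
    show "R' \<subseteq> latt N" by (auto simp: R'_def latt_def)
  next
    fix y assume "y \<in> latt N"
    then obtain z where z: "y = N *v z" by (auto simp: latt_def)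
    obtain r u where r: "r \<in> R" "z - r = D *v u" using R(3)[of z] by (auto simp: latt_def)
    have "y - N *v r = (N ** D) *v u"
      using r z by (simp add: matrix_vector_mult_diff_distrib[symmetric] matrix_vector_mul_assoc[symmetric])
    then show "\<exists>r\<in>R'. y - r \<in> latt (N ** D)" using r unfolding R'_def latt_def by blast
  next
    fix a b assume ab: "a \<in> R'" "b \<in> R'" "a - b \<in> latt (N ** D)"
    then obtain r r' u where rr: "r \<in> R" "r' \<in> R" "a = N *v r" "b = N *v r'" "a - b = N *v (D *v u)"
      by (auto simp: R'_def latt_def matrix_vector_mul_assoc)
    then have "N *v (r - r') = N *v (D *v u)" by (simp add: matrix_vector_mult_diff_distrib)
    then have "r - r' = D *v u" using mat_inj dN by blast
    then have "r = r'" using R(4) rr by (auto simp: latt_def)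
    then show "a = b" using rr by simp
  qed
  ultimately show ?thesis using R by simp
qed

lemma card_quot:
  fixes D :: imat2
  assumes dD: "det D \<noteq> 0"
  shows "card (range (cls UNIV (latt D))) = nat \<bar>det D\<bar>"
proof -
  have "latt (mat 1) = UNIV" by (auto simp: latt_def)
  then show ?thesis using card_latt_quot[OF dD, of "mat 1"] by simp
qed

lemma finite_quot:
  fixes D :: imat2
  assumes dD: "det D \<noteq> 0"
  shows "finite (range (cls UNIV (latt D)))"
proof (rule ccontr)
  assume "infinite (range (cls UNIV (latt D)))"
  then have "card (range (cls UNIV (latt D))) = 0" by simp
  then show False using card_quot[OF dD] dD by simp
qed

lemma tors_all:
  fixes A :: imat2
  assumes dA: "det A \<noteq> 0"
  shows "torsQ UNIV (latt A) (*s) = range (cls UNIV (latt A))"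
proof -
  have "\<exists>n::int. n > 0 \<and> n *s x \<in> latt A" for x
  proof -
    have e: "det A * sgn (det A) = \<bar>det A\<bar>" by (simp add: abs_sgn)
    have "A *v (sgn (det A) *s (adj2 A *v x)) = (sgn (det A) * det A) *s x"
      by (simp add: mv_smult matrix_vector_mul_assoc adj2_right mat_mulv)
    also have "\<dots> = \<bar>det A\<bar> *s x" using e by (simp add: mult.commute)
    finally have "A *v (sgn (det A) *s (adj2 A *v x)) = \<bar>det A\<bar> *s x" .
    then have "\<bar>det A\<bar> *s x \<in> latt A" unfolding latt_def by (metis rangeI)
    then show ?thesis using dA by (intro exI[of _ "\<bar>det A\<bar>"]) auto
  qed
  then show ?thesis by (auto simp: torsQ_def)
qed

definition ocount2 :: "imat2 \<Rightarrow> imat2 \<Rightarrow> nat" where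
  "ocount2 A B = ocount UNIV (latt A) (*s) (\<lambda>x. B *v x)"

lemma qsys2:
  fixes A B B' :: imat2
  assumes BB: "B ** B' = mat 1" "B' ** B = mat 1" and AB: "A ** B = B ** A"
  shows "qsys UNIV (latt A) (*s) (\<lambda>x. B *v x)"
proof -
  have AB': "A ** B' = B' ** A"
  proof -
    have "A ** B' = B' ** B ** A ** B'" using BB by (simp add: matrix_mul_assoc)
    also have "\<dots> = B' ** (A ** B) ** B'" using AB by (simp add: matrix_mul_assoc)
    also have "\<dots> = B' ** A" using BB by (simp add: matrix_mul_assoc[symmetric])
    finally show ?thesis .
  qed
  have bij: "bij_betw (\<lambda>x. B *v x) UNIV UNIV"
  proof (rule bij_betwI[where g = "\<lambda>x. B' *v x"])
    show "B' *v (B *v x) = x" for x using BB by (simp add: matrix_vector_mul_assoc)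
    show "B *v (B' *v x) = x" for x using BB by (simp add: matrix_vector_mul_assoc)
  qed auto
  have img: "(\<lambda>x. B *v x) ` latt A = latt A"
  proof
    show "(\<lambda>x. B *v x) ` latt A \<subseteq> latt A"
    proof
      fix y assume "y \<in> (\<lambda>x. B *v x) ` latt A"
      then obtain x where "y = B *v (A *v x)" by (auto simp: latt_def)
      then have "y = A *v (B *v x)" using AB by (simp add: matrix_vector_mul_assoc)
      then show "y \<in> latt A" by (auto simp: latt_def)
    qed
    show "latt A \<subseteq> (\<lambda>x. B *v x) ` latt A"
    proof
      fix y assume "y \<in> latt A"
      then obtain x where x: "y = A *v x" by (auto simp: latt_def)
      have "y = B *v (A *v (B' *v x))"
        using x BB AB' by (simp add: matrix_vector_mul_assoc matrix_mul_assoc)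
      then show "y \<in> (\<lambda>x. B *v x) ` latt A" by (auto simp: latt_def)
    qed
  qed
  show ?thesis unfolding qsys_def using subgrp_latt[of A] bij img
    by (auto simp: subgrp_def matrix_vector_mult_diff_distrib)
qed

lemma ocount2_conj:
  fixes A B B' P Q :: imat2
  assumes BB: "B ** B' = mat 1" "B' ** B = mat 1" and AB: "A ** B = B ** A"
    and PQ: "P ** Q = mat 1" "Q ** P = mat 1"
  shows "ocount2 (P ** A ** Q) (P ** B ** Q) = ocount2 A B"
proof -
  have q1: "qsys UNIV (latt A) (*s) (\<lambda>x. B *v x)" using qsys2[OF BB AB] .
  have r1: "X ** Q ** P = X" "X ** P ** Q = X" "X ** B ** B' = X" "X ** B' ** B = X" for X :: imat2
    using PQ BB by (simp_all add: matrix_mul_assoc[symmetric])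
  have r2: "X ** A ** B = X ** B ** A" for X :: imat2
    using AB by (simp add: matrix_mul_assoc[symmetric])
  have q2: "qsys UNIV (latt (P ** A ** Q)) (*s) (\<lambda>x. (P ** B ** Q) *v x)"
  proof (rule qsys2)
    show "P ** B ** Q ** (P ** B' ** Q) = mat 1"
      using PQ by (simp add: matrix_mul_assoc r1)
    show "P ** B' ** Q ** (P ** B ** Q) = mat 1"
      using PQ by (simp add: matrix_mul_assoc r1)
    show "P ** A ** Q ** (P ** B ** Q) = P ** B ** Q ** (P ** A ** Q)"
      by (simp add: matrix_mul_assoc r1 r2)
  qed
  show ?thesis unfolding ocount2_def
  proof (rule ocount_transfer[OF q1 q2, where Phi = "\<lambda>x. P *v x", symmetric])
    show "(\<lambda>x. P *v x) ` UNIV = UNIV"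
    proof -
      have "y = P *v (Q *v y)" for y using PQ by (simp add: matrix_vector_mul_assoc)
      then show ?thesis by (metis surj_def)
    qed
    show "P *v (v - w) = P *v v - P *v w" for v w by (simp add: matrix_vector_mult_diff_distrib)
    show "P *v (n *s v) = n *s (P *v v)" for n v by (simp add: mv_smult)
    show "v \<in> latt A \<longleftrightarrow> P *v v \<in> latt (P ** A ** Q)" for v
    proof
      assume "v \<in> latt A"
      then obtain u where "v = A *v u" by (auto simp: latt_def)
      then have "P *v v = (P ** A ** Q) *v (P *v u)"
        using PQ by (simp add: matrix_vector_mul_assoc matrix_mul_assoc r1)
      then show "P *v v \<in> latt (P ** A ** Q)" by (auto simp: latt_def)
    next
      assume "P *v v \<in> latt (P ** A ** Q)"
      then obtain u where "P *v v = (P ** A ** Q) *v u" by (auto simp: latt_def)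
      then have "Q *v (P *v v) = Q *v ((P ** A ** Q) *v u)" by simp
      then have "v = A *v (Q *v u)"
        using PQ by (simp add: matrix_vector_mul_assoc matrix_mul_assoc r1)
      then show "v \<in> latt A" by (auto simp: latt_def)
    qed
    show "P *v (B *v v) - (P ** B ** Q) *v (P *v v) \<in> latt (P ** A ** Q)" for v
    proof -
      have "P *v (B *v v) - (P ** B ** Q) *v (P *v v) = 0"
        using PQ by (simp add: matrix_vector_mul_assoc matrix_mul_assoc r1)
      then show ?thesis using subgrp_latt by (simp add: subgrp_def)
    qed
  qed
qed

(* ---- from W5.thy ---- *)
lemma card_filter_sum: "finite A \<Longrightarrow> card {x\<in>A. P x} = (\<Sum>x\<in>A. if P x then 1 else (0::nat))"
  by (simp add: sum.If_cases Collect_conj_eq Int_commute)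

lemma funpow_period:
  assumes "(f ^^ p) x = x" shows "(f ^^ (p * m + r)) x = (f ^^ r) x"
proof -
  have "(f ^^ (p * m)) x = x" by (induction m) (simp_all add: funpow_add assms)
  then show ?thesis by (simp add: funpow_add add.commute[of "p*m"])
qed

lemma funpow_mod:
  assumes "(f ^^ p) x = x" shows "(f ^^ n) x = (f ^^ (n mod p)) x"
  using funpow_period[OF assms, of "n div p" "n mod p"] by simp

lemma burnside_cyc:
  assumes fin: "finite X" and fX: "\<And>x. x \<in> X \<Longrightarrow> f x \<in> X"
    and per: "\<And>x. x \<in> X \<Longrightarrow> (f ^^ p) x = x" and p: "p > 0"
  shows "p * card ((\<lambda>x. {(f ^^ n) x | n. True}) ` X) = (\<Sum>j<p. card {x\<in>X. (f ^^ j) x = x})"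
proof -
  define orb where "orb = (\<lambda>x. {(f ^^ n) x | n. True})"
  define stab where "stab = (\<lambda>x. {j. j < p \<and> (f ^^ j) x = x})"
  have fnX: "x \<in> X \<Longrightarrow> (f ^^ n) x \<in> X" for x n by (induction n) (auto simp: fX)
  have orb_eq: "orb x = (\<lambda>j. (f ^^ j) x) ` {..<p}" if x: "x \<in> X" for x
  proof
    show "orb x \<subseteq> (\<lambda>j. (f ^^ j) x) ` {..<p}"
    proof
      fix y assume "y \<in> orb x"
      then obtain n where "y = (f ^^ n) x" unfolding orb_def by auto
      then have "y = (f ^^ (n mod p)) x" using funpow_mod[OF per[OF x]] by simp
      then show "y \<in> (\<lambda>j. (f ^^ j) x) ` {..<p}" using p by auto
    qed
  qed (auto simp: orb_def)
  have orb_same: "orb y = orb x" if x: "x \<in> X" and y: "y \<in> orb x" for x y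
  proof -
    obtain a where a: "a < p" "y = (f ^^ a) x" using y orb_eq[OF x] by auto
    have "(f ^^ m) x = (f ^^ (m + p - a)) y" for m
    proof -
      have e: "m + p - a + a = p * 1 + m" using a by simp
      have "(f ^^ (m + p - a)) y = (f ^^ (m + p - a + a)) x" using a by (simp only: funpow_add comp_apply)
      also have "\<dots> = (f ^^ (p * 1 + m)) x" using e by simp
      also have "\<dots> = (f ^^ m) x" using funpow_period[OF per[OF x]] by blast
      finally show ?thesis by simp
    qed
    then have "orb x \<subseteq> orb y" unfolding orb_def by blast
    moreover have "orb y \<subseteq> orb x" unfolding orb_def using a
      by (auto simp: funpow_add[symmetric] simp del: funpow.simps) (metis comp_apply funpow_add)
    ultimately show ?thesis by blast
  qed
  have key: "card (orb x) * card (stab x) = p" if x: "x \<in> X" for x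
  proof -
    have fib: "card {j\<in>{..<p}. (f ^^ j) x = (f ^^ a) x} = card (stab x)" if a: "a < p" for a
    proof (rule sym, rule bij_betw_same_card[where f = "\<lambda>j. (j + a) mod p"],
        rule bij_betwI[where g = "\<lambda>i. (i + (p - a)) mod p"])
      show "(\<lambda>j. (j + a) mod p) \<in> stab x \<rightarrow> {j \<in> {..<p}. (f ^^ j) x = (f ^^ a) x}"
      proof
        fix j assume j: "j \<in> stab x"
        have "(f ^^ ((j + a) mod p)) x = (f ^^ (j + a)) x" using funpow_mod[OF per[OF x]] by simp
        also have "\<dots> = (f ^^ a) x" using j by (simp add: stab_def funpow_add add.commute[of j])
        finally show "(j + a) mod p \<in> {j \<in> {..<p}. (f ^^ j) x = (f ^^ a) x}" using p by simp
      qed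
      show "(\<lambda>i. (i + (p - a)) mod p) \<in> {j \<in> {..<p}. (f ^^ j) x = (f ^^ a) x} \<rightarrow> stab x"
      proof
        fix i assume i: "i \<in> {j \<in> {..<p}. (f ^^ j) x = (f ^^ a) x}"
        have "(f ^^ ((i + (p - a)) mod p)) x = (f ^^ (i + (p - a))) x" using funpow_mod[OF per[OF x]] by simp
        also have "\<dots> = (f ^^ (p - a)) ((f ^^ a) x)" using i by (simp add: funpow_add add.commute[of i])
        also have "\<dots> = (f ^^ (p - a + a)) x" by (simp only: funpow_add comp_apply)
        also have "\<dots> = (f ^^ p) x" using a by simp
        also have "\<dots> = x" using per[OF x] .
        finally show "(i + (p - a)) mod p \<in> stab x" using p by (simp add: stab_def)
      qed
      show "((j + a) mod p + (p - a)) mod p = j" if "j \<in> stab x" for j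
      proof -
        have "((j + a) mod p + (p - a)) mod p = (j + a + (p - a)) mod p" by (simp add: mod_add_left_eq)
        also have "\<dots> = (j + p) mod p" using a by simp
        also have "\<dots> = j" using that by (simp add: stab_def)
        finally show ?thesis .
      qed
      show "((i + (p - a)) mod p + a) mod p = i" if "i \<in> {j \<in> {..<p}. (f ^^ j) x = (f ^^ a) x}" for i
      proof -
        have "((i + (p - a)) mod p + a) mod p = (i + (p - a) + a) mod p" by (simp add: mod_add_left_eq)
        also have "\<dots> = (i + p) mod p" using a by simp
        also have "\<dots> = i" using that by simp
        finally show ?thesis .
      qed
    qed
    have "p = card {..<p}" by simp
    also have "\<dots> = (\<Sum>y\<in>(\<lambda>j. (f ^^ j) x) ` {..<p}. card {j\<in>{..<p}. (f ^^ j) x = y})"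
      using sum.image_gen[of "{..<p}" "\<lambda>_. 1::nat" "\<lambda>j. (f ^^ j) x"] by simp
    also have "\<dots> = (\<Sum>y\<in>orb x. card (stab x))"
      unfolding orb_eq[OF x] using fib by (intro sum.cong) auto
    also have "\<dots> = card (orb x) * card (stab x)" by simp
    finally show ?thesis by simp
  qed
  have "(\<Sum>j<p. card {x\<in>X. (f ^^ j) x = x}) = (\<Sum>j<p. \<Sum>x\<in>X. if (f ^^ j) x = x then 1 else 0)"
    by (intro sum.cong refl card_filter_sum[OF fin])
  also have "\<dots> = (\<Sum>x\<in>X. \<Sum>j<p. if (f ^^ j) x = x then 1 else 0)" by (rule sum.swap)
  also have "\<dots> = (\<Sum>x\<in>X. card (stab x))"
  proof (rule sum.cong)
    fix x assume "x \<in> X"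
    have "card (stab x) = card {j\<in>{..<p}. (f ^^ j) x = x}" unfolding stab_def by (intro arg_cong[where f = card]) auto
    also have "\<dots> = (\<Sum>j<p. if (f ^^ j) x = x then 1 else 0)" by (rule card_filter_sum) simp
    finally show "(\<Sum>j<p. if (f ^^ j) x = x then 1 else 0) = card (stab x)" by simp
  qed simp
  also have "\<dots> = (\<Sum>Y\<in>orb ` X. \<Sum>x\<in>{x\<in>X. orb x = Y}. card (stab x))"
    by (rule sum.image_gen[OF fin])
  also have "\<dots> = (\<Sum>Y\<in>orb ` X. p)"
  proof (rule sum.cong)
    fix Y assume "Y \<in> orb ` X"
    then obtain x0 where x0: "x0 \<in> X" "Y = orb x0" by auto
    have fibO: "{x\<in>X. orb x = Y} = Y"
    proof
      show "{x\<in>X. orb x = Y} \<subseteq> Y"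
      proof
        fix x assume "x \<in> {x\<in>X. orb x = Y}"
        moreover have "x \<in> orb x" unfolding orb_def mem_Collect_eq by (rule exI[of _ 0]) simp
        ultimately show "x \<in> Y" by auto
      qed
      show "Y \<subseteq> {x\<in>X. orb x = Y}"
      proof
        fix y assume y: "y \<in> Y"
        then obtain n where "y = (f ^^ n) x0" using x0 unfolding orb_def by auto
        then have "y \<in> X" using fnX x0(1) by simp
        moreover have "orb y = Y" using orb_same[OF x0(1), of y] y x0(2) by simp
        ultimately show "y \<in> {x\<in>X. orb x = Y}" by simp
      qed
    qed
    have "(\<Sum>x\<in>Y. card (stab x)) = (\<Sum>x\<in>Y. card (stab x0))"
    proof (rule sum.cong)
      fix x assume x: "x \<in> Y"
      have xin: "x \<in> {x\<in>X. orb x = Y}" using x fibO by simp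
      then have xX: "x \<in> X" and ox: "orb x = Y" by simp_all
      have "card (orb x0) * card (stab x) = p" using key[OF xX] ox x0(2) by simp
      then have "card (orb x0) * card (stab x) = card (orb x0) * card (stab x0)"
        using key[OF x0(1)] by simp
      moreover have "card (orb x0) \<noteq> 0"
      proof
        assume "card (orb x0) = 0"
        then have "p = 0" using key[OF x0(1)] by simp
        then show False using p by simp
      qed
      ultimately show "card (stab x) = card (stab x0)" by simp
    qed simp
    also have "\<dots> = card Y * card (stab x0)" by simp
    also have "\<dots> = p" using key[OF x0(1)] x0 by simp
    finally show "(\<Sum>x\<in>{x\<in>X. orb x = Y}. card (stab x)) = p" using fibO by simp
  qed simp
  also have "\<dots> = p * card (orb ` X)" by simp
  finally have "(\<Sum>j<p. card {x\<in>X. (f ^^ j) x = x}) = p * card (orb ` X)" .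
  then show ?thesis by (simp add: orb_def)
qed

(* ---- from W6.thy ---- *)
definition pr :: "(nat \<Rightarrow> int) \<Rightarrow> nat \<Rightarrow> int^2" where
  "pr v i = v2 (v (2*i)) (v (2*i+1))"

definition emb :: "nat \<Rightarrow> int^2 \<Rightarrow> nat \<Rightarrow> int" where
  "emb j y = (\<lambda>p. if p = 2*j then y$1 else if p = 2*j+1 then y$2 else 0)"

definition unpr :: "nat \<Rightarrow> (nat \<Rightarrow> int^2) \<Rightarrow> nat \<Rightarrow> int" where
  "unpr k f = (\<lambda>p. if p < 2*k then (if even p then f (p div 2) $ 1 else f (p div 2) $ 2) else 0)"

primrec hor :: "imat2 \<Rightarrow> (nat \<Rightarrow> int) \<Rightarrow> nat \<Rightarrow> int^2" where
  "hor g v 0 = pr v 0"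
| "hor g v (Suc i) = g *v hor g v i + pr v (Suc i)"

lemma pr_ext:
  assumes "v \<in> zvecs (2*k)" "w \<in> zvecs (2*k)" "\<And>i. i < k \<Longrightarrow> pr v i = pr w i"
  shows "v = w"
proof
  fix p
  show "v p = w p"
  proof (cases "p < 2*k")
    case False then show ?thesis using assms(1,2) by (simp add: zvecs_def)
  next
    case True
    then have i: "p div 2 < k" by simp
    have e: "pr v (p div 2) = pr w (p div 2)" using assms(3)[OF i] .
    show ?thesis
    proof (cases "even p")
      case True
      then have "p = 2 * (p div 2)" by simp
      then show ?thesis using e unfolding pr_def by (metis v2_entries(1))
    next
      case False
      then have "p = 2 * (p div 2) + 1" by simp
      then show ?thesis using e unfolding pr_def by (metis v2_entries(2))
    qed
  qed
qed

lemma pr_minus [simp]: "pr (v - w) i = pr v i - pr w i"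
  by (simp add: pr_def vec_eq_iff forall_2)

lemma pr_plus [simp]: "pr (v + w) i = pr v i + pr w i"
  by (simp add: pr_def vec_eq_iff forall_2)

lemma pr_smult [simp]: "pr (\<lambda>p. n * v p) i = n *s pr v i"
  by (simp add: pr_def vec_eq_iff forall_2)

lemma pr_zero [simp]: "pr 0 i = 0"
  by (simp add: pr_def vec_eq_iff forall_2)

lemma pr_emb [simp]: "pr (emb j y) i = (if i = j then y else 0)"
  by (simp add: pr_def emb_def vec_eq_iff forall_2)

lemma emb_V: "j < k \<Longrightarrow> emb j y \<in> zvecs (2*k)"
  by (simp add: zvecs_def emb_def)

lemma pr_unpr [simp]: "i < k \<Longrightarrow> pr (unpr k f) i = f i"
  by (simp add: pr_def unpr_def vec_eq_iff forall_2)

lemma unpr_V: "unpr k f \<in> zvecs (2*k)"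
  by (simp add: zvecs_def unpr_def)

lemma cyc_V: "cyc_tensor k g v \<in> zvecs (2*k)"
  by (simp add: zvecs_def cyc_tensor_def)

lemma pr_cyc:
  assumes "i < k"
  shows "pr (cyc_tensor k g v) i = g *v pr v ((i + k - 1) mod k)"
proof -
  have a: "2*i < 2*k" "2*i+1 < 2*k" using assms by auto
  have b: "(2*i+1) div 2 = i" by simp
  show ?thesis using a
    by (simp add: pr_def cyc_tensor_def Let_def b m2 v2_def)
qed

lemma pr_cyc1:
  assumes "i < k"
  shows "pr (cyc_tensor k (mat 1) v) i = pr v ((i + k - 1) mod k)"
  using pr_cyc[OF assms] by simp

lemma zvecs_minus: "v \<in> zvecs n \<Longrightarrow> w \<in> zvecs n \<Longrightarrow> v - w \<in> zvecs n"
  by (simp add: zvecs_def)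

lemma zvecs_plus: "v \<in> zvecs n \<Longrightarrow> w \<in> zvecs n \<Longrightarrow> v + w \<in> zvecs n"
  by (simp add: zvecs_def)

lemma cyc_minus: "cyc_tensor k g (v - w) = cyc_tensor k g v - cyc_tensor k g w"
  by (rule ext) (simp add: cyc_tensor_def Let_def algebra_simps)

lemma cyc_zero: "cyc_tensor k g 0 = 0"
  by (rule ext) (simp add: cyc_tensor_def Let_def)

lemma cyc_pow:
  assumes "i < k"
  shows "pr ((cyc_tensor k (mat 1) ^^ n) v) i = pr v ((i + (k - 1) * n) mod k)"
  using assms
proof (induction n arbitrary: i)
  case 0 then show ?case by simp
next
  case (Suc n)
  have k: "k \<ge> 1" using Suc.prems by simp
  have "pr ((cyc_tensor k (mat 1) ^^ Suc n) v) i = pr ((cyc_tensor k (mat 1) ^^ n) v) ((i + k - 1) mod k)"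
    using pr_cyc1[OF Suc.prems] by simp
  also have "\<dots> = pr v (((i + k - 1) mod k + (k - 1) * n) mod k)"
    using Suc.IH[of "(i + k - 1) mod k"] k by simp
  also have "((i + k - 1) mod k + (k - 1) * n) mod k = (i + (k - 1) * Suc n) mod k"
  proof -
    have "((i + k - 1) mod k + (k - 1) * n) mod k = (i + k - 1 + (k - 1) * n) mod k"
      by (simp add: mod_add_left_eq)
    also have "i + k - 1 + (k - 1) * n = i + (k - 1) * Suc n" using k by simp
    finally show ?thesis .
  qed
  finally show ?case .
qed

lemma cyc_pow_k:
  assumes "v \<in> zvecs (2*k)" "k \<ge> 1"
  shows "(cyc_tensor k (mat 1) ^^ k) v = v"
proof (rule pr_ext[OF _ assms(1)])
  obtain m where m: "k = Suc m" using assms(2) by (cases k) auto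
  have "(cyc_tensor k (mat 1) ^^ k) v = cyc_tensor k (mat 1) ((cyc_tensor k (mat 1) ^^ m) v)"
    unfolding m by simp
  then show "(cyc_tensor k (mat 1) ^^ k) v \<in> zvecs (2*k)" using cyc_V by simp
  fix i assume i: "i < k"
  have "(i + (k - 1) * k) mod k = i" using i by simp
  then show "pr ((cyc_tensor k (mat 1) ^^ k) v) i = pr v i" using cyc_pow[OF i] by simp
qed

lemma cyc_comm:
  "cyc_tensor k g (cyc_tensor k (mat 1) v) = cyc_tensor k (mat 1) (cyc_tensor k g v)"
proof (rule pr_ext[OF cyc_V cyc_V])
  fix i assume i: "i < k"
  have i': "(i + k - 1) mod k < k" using i by simp
  show "pr (cyc_tensor k g (cyc_tensor k (mat 1) v)) i = pr (cyc_tensor k (mat 1) (cyc_tensor k g v)) i"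
  proof -
    have "pr (cyc_tensor k g (cyc_tensor k (mat 1) v)) i = g *v pr (cyc_tensor k (mat 1) v) ((i + k - 1) mod k)"
      by (rule pr_cyc[OF i])
    also have "\<dots> = g *v pr v (((i + k - 1) mod k + k - 1) mod k)" by (simp only: pr_cyc1[OF i'])
    also have "\<dots> = pr (cyc_tensor k g v) ((i + k - 1) mod k)" by (simp only: pr_cyc[OF i'])
    also have "\<dots> = pr (cyc_tensor k (mat 1) (cyc_tensor k g v)) i" by (simp only: pr_cyc1[OF i])
    finally show ?thesis .
  qed
qed

(* ---- from W7.thy ---- *)
lemma mm_sub_l: "(A::imat2) ** (B - C) = A ** B - A ** C" by (simp add: m2 algebra_simps)
lemma mm_sub_r: "((A::imat2) - B) ** C = A ** C - B ** C" by (simp add: m2 algebra_simps)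
lemma mv_sub_l: "((A::imat2) - B) *v x = A *v x - B *v x" by (simp add: m2 algebra_simps)
lemma mv_add_r: "(A::imat2) *v (x + y) = A *v x + A *v y" by (simp add: m2 algebra_simps)
lemma smult_add: "(n::int) *s (x + y) = n *s x + n *s (y::int^2)" by (simp add: vec_eq_iff algebra_simps)

lemma pr_minus' [simp]: "pr (\<lambda>a. v a - w a) i = pr v i - pr w i"
  by (simp add: pr_def vec_eq_iff forall_2)

lemma pr_plus' [simp]: "pr (\<lambda>a. v a + w a) i = pr v i + pr w i"
  by (simp add: pr_def vec_eq_iff forall_2)

definition Dk :: "nat \<Rightarrow> imat2 \<Rightarrow> (nat \<Rightarrow> int) \<Rightarrow> (nat \<Rightarrow> int)" where
  "Dk k g v = v - cyc_tensor k g v"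

lemma img_Dk: "img_lattice k g = Dk k g ` zvecs (2*k)"
  by (simp add: img_lattice_def Dk_def)

lemma Dk_V: "v \<in> zvecs (2*k) \<Longrightarrow> Dk k g v \<in> zvecs (2*k)"
  by (simp add: Dk_def zvecs_minus cyc_V)

lemma Dk_minus: "Dk k g (v - w) = Dk k g v - Dk k g w"
  by (simp add: Dk_def cyc_minus)

lemma cyc_pow_V: "v \<in> zvecs (2*k) \<Longrightarrow> (cyc_tensor k (mat 1) ^^ n) v \<in> zvecs (2*k)"
  by (induction n) (auto simp: cyc_V)

lemma img_sub: "x \<in> img_lattice k g \<Longrightarrow> y \<in> img_lattice k g \<Longrightarrow> x - y \<in> img_lattice k g"
proof -
  assume "x \<in> img_lattice k g" "y \<in> img_lattice k g"
  then obtain v w where "v \<in> zvecs (2*k)" "w \<in> zvecs (2*k)" "x = Dk k g v" "y = Dk k g w"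
    by (auto simp: img_Dk)
  then show "x - y \<in> img_lattice k g" by (auto simp: img_Dk Dk_minus[symmetric] zvecs_minus)
qed

lemma img_zero: "0 \<in> img_lattice k g"
proof -
  have "Dk k g 0 = 0" by (simp add: Dk_def cyc_zero)
  moreover have "(0::nat\<Rightarrow>int) \<in> zvecs (2*k)" by (simp add: zvecs_def)
  ultimately show ?thesis unfolding img_Dk by (metis imageI)
qed

lemma img_add: "x \<in> img_lattice k g \<Longrightarrow> y \<in> img_lattice k g \<Longrightarrow> x + y \<in> img_lattice k g"
  using img_sub[of x k g "-y"] img_sub[OF img_zero, of y k g] by simp

lemma Dk_S: "cyc_tensor k (mat 1) (Dk k g v) = Dk k g (cyc_tensor k (mat 1) v)"
  by (simp add: Dk_def cyc_minus cyc_comm)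

lemma qsys_V:
  assumes k: "k \<ge> 1"
  shows "qsys (zvecs (2*k)) (img_lattice k g) (\<lambda>n v p. n * v p) (cyc_tensor k (mat 1))"
proof -
  define S where "S = cyc_tensor k (mat 1)"
  obtain m where m: "k = Suc m" using k by (cases k) auto
  have SkV: "(S ^^ Suc m) v = v" if "v \<in> zvecs (2*k)" for v
    using cyc_pow_k[OF that k] m S_def by simp
  have bij: "bij_betw S (zvecs (2*k)) (zvecs (2*k))"
  proof (rule bij_betwI[where g = "S ^^ m"])
    show "S \<in> zvecs (2*k) \<rightarrow> zvecs (2*k)" using cyc_V S_def by auto
    show "S ^^ m \<in> zvecs (2*k) \<rightarrow> zvecs (2*k)" using cyc_pow_V S_def by auto
    show "(S ^^ m) (S x) = x" if "x \<in> zvecs (2*k)" for x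
      using SkV[OF that] by (simp add: funpow_swap1)
    show "S ((S ^^ m) x) = x" if "x \<in> zvecs (2*k)" for x
      using SkV[OF that] by simp
  qed
  have SI: "S ` img_lattice k g = img_lattice k g"
  proof
    show "S ` img_lattice k g \<subseteq> img_lattice k g"
      using Dk_S cyc_V by (auto simp: img_Dk S_def)
    show "img_lattice k g \<subseteq> S ` img_lattice k g"
    proof
      fix x assume "x \<in> img_lattice k g"
      then obtain v where v: "v \<in> zvecs (2*k)" "x = Dk k g v" by (auto simp: img_Dk)
      have "S (Dk k g ((S ^^ m) v)) = Dk k g (S ((S ^^ m) v))" by (simp add: Dk_S S_def)
      also have "\<dots> = x" using SkV[OF v(1)] v(2) by simp
      finally have "x = S (Dk k g ((S ^^ m) v))" by simp
      moreover have "(S ^^ m) v \<in> zvecs (2*k)" using cyc_pow_V[OF v(1)] S_def by simp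
      ultimately show "x \<in> S ` img_lattice k g" by (auto simp: img_Dk)
    qed
  qed
  have IV: "img_lattice k g \<subseteq> zvecs (2*k)" using Dk_V by (auto simp: img_Dk)
  have Sadd: "\<forall>v\<in>zvecs (2*k). \<forall>w\<in>zvecs (2*k). S (v - w) = S v - S w"
    by (simp add: S_def cyc_minus)
  have smV: "\<forall>n. \<forall>v\<in>zvecs (2*k). (\<lambda>p. n * v p) \<in> zvecs (2*k)"
    by (simp add: zvecs_def)
  have subV: "\<forall>v\<in>zvecs (2*k). \<forall>w\<in>zvecs (2*k). v - w \<in> zvecs (2*k)"
    using zvecs_minus by blast
  have subI: "\<forall>v\<in>img_lattice k g. \<forall>w\<in>img_lattice k g. v - w \<in> img_lattice k g"
    using img_sub by blast
  show ?thesis unfolding qsys_def S_def[symmetric]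
    using bij SI IV img_zero subI subV Sadd smV by (intro conjI)
qed

definition Phi :: "nat \<Rightarrow> imat2 \<Rightarrow> (nat \<Rightarrow> int) \<Rightarrow> int^2" where
  "Phi k g v = hor g v (k - 1)"

lemma hor_minus: "hor g (v - w) i = hor g v i - hor g w i"
proof (induction i)
  case (Suc i)
  have "hor g (v - w) (Suc i) = g *v (hor g v i - hor g w i) + (pr v (Suc i) - pr w (Suc i))"
    by (simp only: hor.simps Suc.IH pr_minus)
  also have "\<dots> = hor g v (Suc i) - hor g w (Suc i)" by (simp add: matrix_vector_mult_diff_distrib algebra_simps)
  finally show ?case .
qed simp

lemma hor_plus: "hor g (v + w) i = hor g v i + hor g w i"
proof (induction i)
  case (Suc i)
  have "hor g (v + w) (Suc i) = g *v (hor g v i + hor g w i) + (pr v (Suc i) + pr w (Suc i))"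
    by (simp only: hor.simps Suc.IH pr_plus)
  also have "\<dots> = hor g v (Suc i) + hor g w (Suc i)" by (simp add: mv_add_r algebra_simps)
  finally show ?case .
qed simp

lemma hor_smult: "hor g (\<lambda>p. n * v p) i = n *s hor g v i"
  by (induction i) (simp_all add: mv_smult smult_add)

lemma hor_emb_last: "i \<le> j \<Longrightarrow> hor g (emb j y) i = (if i = j then y else 0)"
  by (induction i) auto

lemma hor_emb0: "hor g (emb 0 y) i = mat_pow g i *v y"
  by (induction i) (simp_all add: matrix_vector_mul_assoc)

lemma Phi_emb_last: "Phi k g (emb (k - 1) y) = y"
  by (simp add: Phi_def hor_emb_last)

lemma Phi_emb0: "Phi k g (emb 0 y) = mat_pow g (k - 1) *v y"
  by (simp add: Phi_def hor_emb0)

lemma hor_cyc: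
  assumes "i < k"
  shows "hor g (cyc_tensor k g u) i = mat_pow g (Suc i) *v pr u (k - 1) + (if i = 0 then 0 else g *v hor g u (i - 1))"
  using assms
proof (induction i)
  case 0
  have "(0 + k - 1) mod k = k - 1" using 0 by simp
  then show ?case using pr_cyc[OF 0] by simp
next
  case (Suc i)
  have e: "(Suc i + k - 1) mod k = i" using Suc.prems by simp
  have "hor g (cyc_tensor k g u) (Suc i) = g *v hor g (cyc_tensor k g u) i + g *v pr u i"
    using pr_cyc[OF Suc.prems] e by simp
  also have "\<dots> = mat_pow g (Suc (Suc i)) *v pr u (k - 1) + g *v hor g u i"
    using Suc.IH Suc.prems
    by (cases i) (simp_all add: mv_add_r matrix_vector_mul_assoc algebra_simps)
  finally show ?case by simp
qed

lemma Phi_Dk: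
  assumes k: "k = Suc m"
  shows "Phi k g (Dk k g u) = (mat 1 - mat_pow g k) *v pr u m"
proof -
  have "Phi k g (Dk k g u) = hor g u m - hor g (cyc_tensor k g u) m"
    unfolding Phi_def Dk_def using k by (simp add: hor_minus)
  also have "hor g (cyc_tensor k g u) m = mat_pow g k *v pr u m + (if m = 0 then 0 else g *v hor g u (m - 1))"
    using hor_cyc[of m k g u] k by simp
  finally have e: "Phi k g (Dk k g u) = hor g u m - (mat_pow g k *v pr u m + (if m = 0 then 0 else g *v hor g u (m - 1)))" .
  show ?thesis
  proof (cases m)
    case 0 then show ?thesis using e by (simp add: mv_sub_l)
  next
    case (Suc j) then show ?thesis using e by (simp add: mv_sub_l)
  qed
qed

(* ---- from W8.thy ---- *)
lemma F2:
  assumes k: "k = Suc m" and v: "v \<in> zvecs (2*k)"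
  shows "v - emb m (Phi k g v) \<in> img_lattice k g"
proof -
  define f where "f = (\<lambda>i. if i < m then hor g v i else 0)"
  define U where "U = unpr k f"
  have UV: "U \<in> zvecs (2*k)" by (simp add: U_def unpr_V)
  have "Dk k g U = v - emb m (Phi k g v)"
  proof (rule pr_ext[OF Dk_V[OF UV] zvecs_minus[OF v emb_V]])
    show "m < k" using k by simp
    fix i assume i: "i < k"
    have l: "pr (Dk k g U) i = f i - g *v f ((i + k - 1) mod k)"
      using i by (simp add: Dk_def pr_cyc U_def)
    have r: "pr (v - emb m (Phi k g v)) i = pr v i - (if i = m then hor g v m else 0)"
      using k by (simp add: Phi_def)
    show "pr (Dk k g U) i = pr (v - emb m (Phi k g v)) i"
    proof (cases i)
      case 0
      have "(0 + k - 1) mod k = m" using k by simp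
      then show ?thesis using l r 0 by (cases m) (simp_all add: f_def)
    next
      case (Suc j)
      have jm: "j < m" using i k Suc by simp
      have "i + k - 1 = j + k" using Suc k by simp
      moreover have "j < k" using jm k by simp
    then have "(j + k) mod k = j" by simp
      ultimately have "(i + k - 1) mod k = j" by simp
      then have l': "pr (Dk k g U) i = f (Suc j) - g *v hor g v j" using l jm Suc by (simp add: f_def)
      show ?thesis
      proof (cases "Suc j = m")
        case True
        have hm: "hor g v m = g *v hor g v j + pr v m" unfolding True[symmetric] by simp
        show ?thesis using l' r Suc True hm by (simp add: f_def)
      next
        case False then have "Suc j < m" using jm by simp
        then show ?thesis using l' r Suc by (simp add: f_def)
      qed
    qed
  qed
  then show ?thesis using UV unfolding img_Dk by (metis imageI)
qed

lemma Phi_minus: "Phi k g (v - w) = Phi k g v - Phi k g w"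
  by (simp add: Phi_def hor_minus)

lemma Phi_smult: "Phi k g (\<lambda>p. n * v p) = n *s Phi k g v"
  by (simp add: Phi_def hor_smult)

lemma Phi_I:
  assumes k: "k = Suc m" and v: "v \<in> zvecs (2*k)"
  shows "v \<in> img_lattice k g \<longleftrightarrow> Phi k g v \<in> latt (mat 1 - mat_pow g k)"
proof
  assume "v \<in> img_lattice k g"
  then obtain u where "u \<in> zvecs (2*k)" "v = Dk k g u" by (auto simp: img_Dk)
  then have "Phi k g v = (mat 1 - mat_pow g k) *v pr u m" using Phi_Dk[OF k] by simp
  then show "Phi k g v \<in> latt (mat 1 - mat_pow g k)" by (auto simp: latt_def)
next
  assume "Phi k g v \<in> latt (mat 1 - mat_pow g k)"
  then obtain y where y: "Phi k g v = (mat 1 - mat_pow g k) *v y" by (auto simp: latt_def)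
  define u where "u = emb m y"
  have mk: "m < k" using k by simp
  have uV: "u \<in> zvecs (2*k)" unfolding u_def by (rule emb_V[OF mk])
  have DuV: "Dk k g u \<in> zvecs (2*k)" using Dk_V[OF uV] .
  have DuI: "Dk k g u \<in> img_lattice k g" using uV unfolding img_Dk by blast
  have PD: "Phi k g (Dk k g u) = Phi k g v" using Phi_Dk[OF k, of g u] y by (simp add: u_def)
  have a: "v - emb m (Phi k g v) \<in> img_lattice k g" using F2[OF k v, where g=g] .
  have b: "Dk k g u - emb m (Phi k g v) \<in> img_lattice k g" using F2[OF k DuV, where g=g] PD by simp
  have "v = ((v - emb m (Phi k g v)) - (Dk k g u - emb m (Phi k g v))) + Dk k g u" by simp
  also have "\<dots> \<in> img_lattice k g" using img_add[OF img_sub[OF a b] DuI] .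
  finally show "v \<in> img_lattice k g" .
qed

lemma S_emb:
  assumes k: "k = Suc m"
  shows "cyc_tensor k (mat 1) (emb m y) = emb 0 y"
proof (rule pr_ext[OF cyc_V emb_V])
  show "0 < k" using k by simp
  fix i assume i: "i < k"
  have "((i + k - 1) mod k = m) \<longleftrightarrow> i = 0"
  proof (cases i)
    case 0 then show ?thesis using k by simp
  next
    case (Suc j)
    then have jm: "j < m" using i k by simp
    have "i + k - 1 = j + k" using Suc k by simp
    moreover have "j < k" using jm k by simp
    then have "(j + k) mod k = j" by simp
    ultimately have "(i + k - 1) mod k = j" by simp
    then show ?thesis using Suc jm by simp
  qed
  then show "pr (cyc_tensor k (mat 1) (emb m y)) i = pr (emb 0 y) i"
    using pr_cyc1[OF i] by simp
qed

lemma Phi_S: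
  assumes k: "k = Suc m" and v: "v \<in> zvecs (2*k)"
  shows "Phi k g (cyc_tensor k (mat 1) v) - mat_pow g m *v Phi k g v \<in> latt (mat 1 - mat_pow g k)"
proof -
  define e where "e = emb m (Phi k g v)"
  have "v - e \<in> img_lattice k g" using F2[OF k v] by (simp add: e_def)
  then obtain u where u: "u \<in> zvecs (2*k)" "v - e = Dk k g u" by (auto simp: img_Dk)
  have "cyc_tensor k (mat 1) (v - e) = Dk k g (cyc_tensor k (mat 1) u)" using u by (simp add: Dk_S)
  moreover have "cyc_tensor k (mat 1) u \<in> zvecs (2*k)" by (rule cyc_V)
  ultimately have "cyc_tensor k (mat 1) (v - e) \<in> img_lattice k g" unfolding img_Dk by (metis imageI)
  moreover have "cyc_tensor k (mat 1) (v - e) = cyc_tensor k (mat 1) v - emb 0 (Phi k g v)"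
    by (simp add: cyc_minus S_emb[OF k] e_def)
  ultimately have "cyc_tensor k (mat 1) v - emb 0 (Phi k g v) \<in> img_lattice k g" by simp
  moreover have "cyc_tensor k (mat 1) v - emb 0 (Phi k g v) \<in> zvecs (2*k)"
    using k by (intro zvecs_minus cyc_V emb_V) simp
  ultimately have "Phi k g (cyc_tensor k (mat 1) v - emb 0 (Phi k g v)) \<in> latt (mat 1 - mat_pow g k)"
    using Phi_I[OF k] by blast
  then show ?thesis using k by (simp add: Phi_minus Phi_emb0)
qed

lemma ck_ocount:
  "c_k k g = ocount (zvecs (2*k)) (img_lattice k g) (\<lambda>n v p. n * v p) (cyc_tensor k (mat 1))"
proof -
  have "coker_tors k g = torsQ (zvecs (2*k)) (img_lattice k g) (\<lambda>n v p. n * v p)"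
    by (simp add: coker_tors_def torsQ_def coker_class_def cls_def)
  then show ?thesis unfolding c_k_def ocount_def orbQ_def by (simp add: Setcompr_eq_image)
qed

theorem ck_reduce:
  assumes g: "det g = 1" and k: "k = Suc m"
  shows "c_k k g = ocount2 (mat 1 - mat_pow g k) (mat_pow g m)"
proof -
  have q1: "qsys (zvecs (2*k)) (img_lattice k g) (\<lambda>n v p. n * v p) (cyc_tensor k (mat 1))"
    using qsys_V[of k g] k by (simp only: Suc_le_eq zero_less_Suc)
  have q2: "qsys UNIV (latt (mat 1 - mat_pow g k)) (*s) (\<lambda>x. mat_pow g m *v x)"
  proof (rule qsys2)
    show "mat_pow g m ** adj2 (mat_pow g m) = mat 1" using adj2_right det_mat_pow[OF g] by simp
    show "adj2 (mat_pow g m) ** mat_pow g m = mat 1" using adj2_left det_mat_pow[OF g] by simp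
    show "(mat 1 - mat_pow g k) ** mat_pow g m = mat_pow g m ** (mat 1 - mat_pow g k)"
      by (simp add: mm_sub_l mm_sub_r mat_pow_comm)
  qed
  have "c_k k g = ocount UNIV (latt (mat 1 - mat_pow g k)) (*s) (\<lambda>x. mat_pow g m *v x)"
    unfolding ck_ocount
  proof (rule ocount_transfer[OF q1 q2, where Phi = "Phi k g"])
    show "Phi k g ` zvecs (2*k) = UNIV"
    proof -
      have "y = Phi k g (emb m y)" for y using Phi_emb_last[of k g y] k by simp
      moreover have "emb m y \<in> zvecs (2*k)" for y using k by (intro emb_V) simp
      ultimately show ?thesis by blast
    qed
    show "Phi k g (v - w) = Phi k g v - Phi k g w" for v w by (rule Phi_minus)
    show "Phi k g (\<lambda>p. n * v p) = n *s Phi k g v" for n v by (rule Phi_smult)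
    show "v \<in> img_lattice k g \<longleftrightarrow> Phi k g v \<in> latt (mat 1 - mat_pow g k)" if "v \<in> zvecs (2*k)" for v
      using Phi_I[OF k that] .
    show "Phi k g (cyc_tensor k (mat 1) v) - mat_pow g m *v Phi k g v \<in> latt (mat 1 - mat_pow g k)"
      if "v \<in> zvecs (2*k)" for v using Phi_S[OF k that] .
  qed
  then show ?thesis by (simp add: ocount2_def)
qed

(* ---- from W9.thy ---- *)
primrec geo :: "imat2 \<Rightarrow> nat \<Rightarrow> imat2" where
  "geo M 0 = mat 0"
| "geo M (Suc n) = mat 1 + M ** geo M n"

lemma mm_add_l: "(A::imat2) ** (B + C) = A ** B + A ** C" by (simp add: m2 algebra_simps)
lemma mm_add_r: "((A::imat2) + B) ** C = A ** C + B ** C" by (simp add: m2 algebra_simps)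
lemma mm_zero_r: "(A::imat2) ** mat 0 = mat 0" by (simp add: m2)
lemma mm_zero_l: "mat 0 ** (A::imat2) = mat 0" by (simp add: m2)

lemma geo_comm: "M ** geo M n = geo M n ** M"
  by (induction n) (simp_all add: mm_add_l mm_add_r mm_zero_r mm_zero_l matrix_mul_assoc)

lemma geo_mult: "(mat 1 - M) ** geo M n = mat 1 - mat_pow M n"
proof (induction n)
  case 0 then show ?case by (simp add: mm_zero_r m2)
next
  case (Suc n)
  have "(mat 1 - M) ** geo M (Suc n) = (mat 1 - M) + (mat 1 - M) ** (M ** geo M n)"
    by (simp add: mm_add_l)
  also have "(mat 1 - M) ** (M ** geo M n) = M ** ((mat 1 - M) ** geo M n)"
    by (simp add: matrix_mul_assoc mm_sub_l mm_sub_r)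
  also have "\<dots> = M - mat_pow M (Suc n)" using Suc by (simp add: mm_sub_l)
  finally show ?case by simp
qed

lemma geo_comm2: "(mat 1 - M) ** geo M n = geo M n ** (mat 1 - M)"
  by (simp add: mm_sub_l mm_sub_r geo_comm)

definition Fx :: "imat2 \<Rightarrow> nat \<Rightarrow> nat \<Rightarrow> (int^2) set" where
  "Fx g k a = {x. mat_pow g a *v x - x \<in> latt (mat 1 - mat_pow g k)}"

lemma latt_pow_closed:
  assumes "y \<in> latt (mat 1 - mat_pow g k)"
  shows "mat_pow g a *v y \<in> latt (mat 1 - mat_pow g k)"
proof -
  obtain u where u: "y = (mat 1 - mat_pow g k) *v u" using assms by (auto simp: latt_def)
  have "mat_pow g a ** (mat 1 - mat_pow g k) = (mat 1 - mat_pow g k) ** mat_pow g a"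
    by (simp add: mm_sub_l mm_sub_r mat_pow_comm)
  then have "mat_pow g a *v y = (mat 1 - mat_pow g k) *v (mat_pow g a *v u)"
    using u by (simp add: matrix_vector_mul_assoc)
  then show ?thesis by (auto simp: latt_def)
qed

lemma Fx_add:
  assumes "x \<in> Fx g k a" "x \<in> Fx g k b" shows "x \<in> Fx g k (a + b)"
proof -
  let ?L = "latt (mat 1 - mat_pow g k)"
  have "mat_pow g (a + b) *v x - x = mat_pow g a *v (mat_pow g b *v x - x) + (mat_pow g a *v x - x)"
    by (simp add: mat_pow_add matrix_vector_mul_assoc matrix_vector_mult_diff_distrib)
  moreover have "mat_pow g a *v (mat_pow g b *v x - x) \<in> ?L"
    using latt_pow_closed assms(2) by (simp add: Fx_def)
  moreover have "mat_pow g a *v x - x \<in> ?L" using assms(1) by (simp add: Fx_def)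
  ultimately have "mat_pow g (a + b) *v x - x \<in> ?L"
    using subgrp_add[OF subgrp_latt] by metis
  then show ?thesis by (simp add: Fx_def)
qed

lemma Fx_sub:
  assumes "x \<in> Fx g k (a + b)" "x \<in> Fx g k b" shows "x \<in> Fx g k a"
proof -
  let ?L = "latt (mat 1 - mat_pow g k)"
  have "mat_pow g a *v x - x = (mat_pow g (a + b) *v x - x) - mat_pow g a *v (mat_pow g b *v x - x)"
    by (simp add: mat_pow_add matrix_vector_mul_assoc matrix_vector_mult_diff_distrib)
  moreover have "mat_pow g a *v (mat_pow g b *v x - x) \<in> ?L"
    using latt_pow_closed assms(2) by (simp add: Fx_def)
  moreover have "mat_pow g (a + b) *v x - x \<in> ?L" using assms(1) by (simp add: Fx_def)
  ultimately have "mat_pow g a *v x - x \<in> ?L"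
    using subgrp_latt unfolding subgrp_def by metis
  then show ?thesis by (simp add: Fx_def)
qed

lemma Fx_mult: "x \<in> Fx g k a \<Longrightarrow> x \<in> Fx g k (a * c)"
proof (induction c)
  case 0
  have "0 \<in> latt (mat 1 - mat_pow g k)" using subgrp_latt by (simp add: subgrp_def)
  then show ?case by (simp add: Fx_def)
next
  case (Suc c)
  then show ?case using Fx_add[of x g k a "a * c"] by (simp add: add.commute)
qed

lemma Fx_k: "x \<in> Fx g k k"
proof -
  have "mat_pow g k *v x - x = (mat 1 - mat_pow g k) *v (- x)"
    by (simp add: m2 algebra_simps)
  then show ?thesis by (auto simp: Fx_def latt_def)
qed

lemma Fx_gcd: "Fx g k a = Fx g k (gcd a k)"
proof
  show "Fx g k (gcd a k) \<subseteq> Fx g k a"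
  proof
    fix x assume x: "x \<in> Fx g k (gcd a k)"
    obtain c where "a = gcd a k * c" by (meson gcd_dvd1 dvdE)
    then show "x \<in> Fx g k a" using Fx_mult[OF x, of c] by simp
  qed
  show "Fx g k a \<subseteq> Fx g k (gcd a k)"
  proof
    fix x assume x: "x \<in> Fx g k a"
    show "x \<in> Fx g k (gcd a k)"
    proof (cases "a = 0")
      case True then show ?thesis using Fx_k by simp
    next
      case False
      then obtain u v where uv: "a * u = k * v + gcd a k" using bezout_nat by blast
      have "x \<in> Fx g k (k * v + gcd a k)" using Fx_mult[OF x, of u] uv by simp
      moreover have "x \<in> Fx g k (k * v)" using Fx_mult[OF Fx_k] by blast
      ultimately show ?thesis using Fx_sub[of x g k "gcd a k" "k * v"] by (simp add: add.commute)
    qed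
  qed
qed

lemma Fx_latt:
  assumes dD: "det (mat 1 - mat_pow g d) \<noteq> 0" and k: "k = d * c"
  shows "Fx g k d = latt (geo (mat_pow g d) c)"
proof -
  define D where "D = mat 1 - mat_pow g d"
  define N where "N = geo (mat_pow g d) c"
  have DN: "D ** N = mat 1 - mat_pow g k"
    unfolding D_def N_def using geo_mult[of "mat_pow g d" c] k by (simp add: mat_pow_mult)
  show ?thesis unfolding N_def[symmetric]
  proof
    show "Fx g k d \<subseteq> latt N"
    proof
      fix x assume "x \<in> Fx g k d"
      then obtain u where u: "mat_pow g d *v x - x = (D ** N) *v u" using DN by (auto simp: Fx_def latt_def)
      have "D *v (x + N *v u) = 0"
        using u by (simp add: D_def mv_sub_l mv_add_r matrix_vector_mul_assoc[symmetric] algebra_simps)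
      then have "x + N *v u = 0" using mat_inj[OF dD[folded D_def], of "x + N *v u" 0] by simp
      then have "x = N *v (- u)" by (simp add: m2 algebra_simps eq_neg_iff_add_eq_0)
      then show "x \<in> latt N" by (auto simp: latt_def)
    qed
    show "latt N \<subseteq> Fx g k d"
    proof
      fix x assume "x \<in> latt N"
      then obtain u where u: "x = N *v u" by (auto simp: latt_def)
      have "mat_pow g d *v x - x = (D ** N) *v (- u)"
        using u by (simp add: D_def mv_sub_l matrix_vector_mul_assoc[symmetric] m2 algebra_simps)
      then show "x \<in> Fx g k d" using DN by (auto simp: Fx_def latt_def)
    qed
  qed
qed

(* ---- from W10.thy ---- *)
lemma qsys_pow:
  assumes g: "det g = 1"
  shows "qsys UNIV (latt (mat 1 - mat_pow g k)) (*s) (\<lambda>x. mat_pow g m *v x)"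
proof (rule qsys2)
  show "mat_pow g m ** adj2 (mat_pow g m) = mat 1" using adj2_right det_mat_pow[OF g] by simp
  show "adj2 (mat_pow g m) ** mat_pow g m = mat 1" using adj2_left det_mat_pow[OF g] by simp
  show "(mat 1 - mat_pow g k) ** mat_pow g m = mat_pow g m ** (mat 1 - mat_pow g k)"
    by (simp add: mm_sub_l mm_sub_r mat_pow_comm)
qed

lemma S_pow: "((\<lambda>x. mat_pow g m *v x) ^^ n) x = mat_pow g (m * n) *v x"
  by (induction n) (simp_all add: mat_pow_add matrix_vector_mul_assoc)

lemma f_pow: "((\<lambda>C. (S::'a\<Rightarrow>'a) ` C) ^^ n) C = (S ^^ n) ` C"
proof (induction n)
  case 0 show ?case by (simp add: id_def)
next
  case (Suc n)
  have "((\<lambda>C. S ` C) ^^ Suc n) C = S ` (((\<lambda>C. S ` C) ^^ n) C)" by simp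
  also have "\<dots> = S ` ((S ^^ n) ` C)" using Suc by simp
  also have "\<dots> = (S ^^ Suc n) ` C" by (simp add: image_comp)
  finally show ?case .
qed

lemma ocount2_burnside:
  assumes g: "det g = 1" and k: "k = Suc m" and dA: "det (mat 1 - mat_pow g k) \<noteq> 0"
  shows "k * ocount2 (mat 1 - mat_pow g k) (mat_pow g m) =
    (\<Sum>j<k. card (cls UNIV (latt (mat 1 - mat_pow g k)) ` Fx g k (gcd j k)))"
proof -
  define L where "L = latt (mat 1 - mat_pow g k)"
  define S where "S = (\<lambda>x. mat_pow g m *v x)"
  define f where "f = (\<lambda>C. S ` C)"
  define X where "X = range (cls UNIV L)"
  have q: "qsys UNIV L (*s) S" unfolding L_def S_def by (rule qsys_pow[OF g])
  have sg: "subgrp L" unfolding L_def by (rule subgrp_latt)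
  have fpow: "(f ^^ n) (cls UNIV L x) = cls UNIV L (mat_pow g (m * n) *v x)" for n x
  proof -
    have "(f ^^ n) (cls UNIV L x) = (S ^^ n) ` cls UNIV L x" unfolding f_def by (rule f_pow)
    also have "\<dots> = cls UNIV L ((S ^^ n) x)" by (rule qsys_Sn_cls[OF q UNIV_I])
    also have "(S ^^ n) x = mat_pow g (m * n) *v x" unfolding S_def by (rule S_pow)
    finally show ?thesis .
  qed
  have fin: "finite X" unfolding X_def L_def by (rule finite_quot[OF dA])
  have fX: "f C \<in> X" if CX: "C \<in> X" for C
  proof -
    obtain x where x: "C = cls UNIV L x" using CX unfolding X_def by blast
    have "f C = cls UNIV L (mat_pow g (m * 1) *v x)" using fpow[of 1 x] x by simp
    then show ?thesis by (simp add: X_def)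
  qed
  have per: "(f ^^ k) C = C" if CX: "C \<in> X" for C
  proof -
    obtain x where x: "C = cls UNIV L x" using CX unfolding X_def by blast
    have "x \<in> Fx g k (k * m)" using Fx_mult[OF Fx_k] .
    then have "mat_pow g (m * k) *v x - x \<in> L" by (simp add: Fx_def L_def mult.commute)
    then show ?thesis using x fpow[of k x] cls_UNIV_eq_iff[OF sg] by simp
  qed
  have B: "k * card ((\<lambda>C. {(f ^^ n) C | n. True}) ` X) = (\<Sum>j<k. card {C\<in>X. (f ^^ j) C = C})"
    using burnside_cyc[OF fin fX per] k by simp
  have oc: "ocount2 (mat 1 - mat_pow g k) (mat_pow g m) = card ((\<lambda>C. {(f ^^ n) C | n. True}) ` X)"
    unfolding ocount2_def ocount_def tors_all[OF dA] orbQ_def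
    by (simp add: f_def f_pow S_def X_def L_def)
  have fixs: "{C\<in>X. (f ^^ j) C = C} = cls UNIV L ` Fx g k (gcd j k)" for j
  proof -
    have gj: "gcd (m * j) k = gcd j k"
      using gcd_mult_left_left_cancel[of k m j] k by simp
    have "{C\<in>X. (f ^^ j) C = C} = cls UNIV L ` Fx g k (m * j)"
    proof
      show "{C\<in>X. (f ^^ j) C = C} \<subseteq> cls UNIV L ` Fx g k (m * j)"
      proof
        fix C assume C: "C \<in> {C\<in>X. (f ^^ j) C = C}"
        then obtain x where x: "C = cls UNIV L x" unfolding X_def by blast
        then have "cls UNIV L (mat_pow g (m * j) *v x) = cls UNIV L x" using C fpow by simp
        then have "x \<in> Fx g k (m * j)" using cls_UNIV_eq_iff[OF sg] by (simp add: Fx_def L_def)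
        then show "C \<in> cls UNIV L ` Fx g k (m * j)" using x by simp
      qed
      show "cls UNIV L ` Fx g k (m * j) \<subseteq> {C\<in>X. (f ^^ j) C = C}"
      proof
        fix C assume "C \<in> cls UNIV L ` Fx g k (m * j)"
        then obtain x where x: "C = cls UNIV L x" "x \<in> Fx g k (m * j)" by auto
        then have "cls UNIV L (mat_pow g (m * j) *v x) = cls UNIV L x"
          using cls_UNIV_eq_iff[OF sg] by (simp add: Fx_def L_def)
        then show "C \<in> {C\<in>X. (f ^^ j) C = C}" using x fpow by (simp add: X_def)
      qed
    qed
    also have "\<dots> = cls UNIV L ` Fx g k (gcd j k)" using Fx_gcd[of g k "m * j"] gj by simp
    finally show ?thesis .
  qed
  show ?thesis using B oc fixs by (simp add: L_def)
qed

(* ---- from W11.thy ---- *)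
lemma card_Fx:
  assumes dk: "d dvd k" and k0: "k > 0" and dD: "det (mat 1 - mat_pow g d) \<noteq> 0"
    and dA: "det (mat 1 - mat_pow g k) \<noteq> 0"
  shows "card (cls UNIV (latt (mat 1 - mat_pow g k)) ` Fx g k d) = nat \<bar>det (mat 1 - mat_pow g d)\<bar>"
proof -
  obtain c where c: "k = d * c" using dk by (auto simp: dvd_def)
  define D where "D = mat 1 - mat_pow g d"
  define N where "N = geo (mat_pow g d) c"
  have DN: "D ** N = mat 1 - mat_pow g k"
    unfolding D_def N_def using geo_mult[of "mat_pow g d" c] c by (simp add: mat_pow_mult)
  have ND: "N ** D = D ** N" unfolding D_def N_def by (simp add: geo_comm2)
  have e: "det (mat 1 - mat_pow g k) = det D * det N" using DN det_mul[of D N] by simp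
  have dN: "det N \<noteq> 0" using e dA by auto
  have "Fx g k d = latt N" unfolding N_def by (rule Fx_latt[OF dD c])
  then have "cls UNIV (latt (mat 1 - mat_pow g k)) ` Fx g k d = cls UNIV (latt (N ** D)) ` latt N"
    using DN ND by simp
  also have "card \<dots> = nat \<bar>det D\<bar>" by (rule card_latt_quot[OF _ dN]) (simp add: D_def dD)
  finally show ?thesis by (simp add: D_def)
qed

lemma trace2: "trace (M::imat2) = M$1$1 + M$2$2"
  by (simp add: trace_def sum_2)

lemma det_one_minus:
  assumes "det (M::imat2) = 1" shows "det (mat 1 - M) = 2 - trace M"
  using assms by (simp add: det_2 trace2 mat_def algebra_simps)

lemma gcd_sum:
  fixes h :: "nat \<Rightarrow> 'a::comm_semiring_1"
  assumes k0: "k > 0"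
  shows "(\<Sum>j<k. h (gcd j k)) = (\<Sum>d\<in>{d. d dvd k}. of_nat (totient (k div d)) * h d)"
proof -
  have "(\<Sum>j<k. h (gcd j k)) = (\<Sum>j\<in>{0<..k}. h (gcd j k))"
  proof -
    have e1: "{..<k} = insert 0 {0<..<k}" using k0 by auto
    have e2: "{0<..k} = insert k {0<..<k}" using k0 by auto
    have "(\<Sum>j<k. h (gcd j k)) = h (gcd 0 k) + (\<Sum>j\<in>{0<..<k}. h (gcd j k))"
      unfolding e1 by (rule sum.insert) auto
    moreover have "(\<Sum>j\<in>{0<..k}. h (gcd j k)) = h (gcd k k) + (\<Sum>j\<in>{0<..<k}. h (gcd j k))"
      unfolding e2 by (rule sum.insert) auto
    ultimately show ?thesis by simp
  qed
  also have "\<dots> = (\<Sum>d\<in>(\<lambda>j. gcd j k) ` {0<..k}. \<Sum>j\<in>{j\<in>{0<..k}. gcd j k = d}. h (gcd j k))"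
    by (rule sum.image_gen) simp
  also have "\<dots> = (\<Sum>d\<in>{d. d dvd k}. of_nat (totient (k div d)) * h d)"
  proof (rule sum.cong)
    show "(\<lambda>j. gcd j k) ` {0<..k} = {d. d dvd k}"
    proof
      show "(\<lambda>j. gcd j k) ` {0<..k} \<subseteq> {d. d dvd k}" by auto
      show "{d. d dvd k} \<subseteq> (\<lambda>j. gcd j k) ` {0<..k}"
      proof
        fix d assume "d \<in> {d. d dvd k}"
        then have d: "d dvd k" by simp
        have "d \<noteq> 0" using d k0 by (cases "d = 0") auto
        moreover have "d \<le> k" using dvd_imp_le[OF d k0] .
        moreover have "gcd d k = d" using d by (simp add: gcd_nat.absorb1)
        ultimately have "d \<in> {0<..k}" "d = gcd d k" by auto
        then show "d \<in> (\<lambda>j. gcd j k) ` {0<..k}" by (rule rev_image_eqI)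
      qed
    qed
  next
    fix d assume "d \<in> {d. d dvd k}"
    then have d: "d dvd k" by simp
    have "(\<Sum>j\<in>{j\<in>{0<..k}. gcd j k = d}. h (gcd j k)) = (\<Sum>j\<in>{j\<in>{0<..k}. gcd j k = d}. h d)"
      by (rule sum.cong) auto
    also have "\<dots> = of_nat (card {j\<in>{0<..k}. gcd j k = d}) * h d" by simp
    also have "card {j\<in>{0<..k}. gcd j k = d} = totient (k div d)"
      by (rule card_gcd_eq_totient[OF k0 d])
    finally show "(\<Sum>j\<in>{j\<in>{0<..k}. gcd j k = d}. h (gcd j k)) = of_nat (totient (k div d)) * h d" .
  qed
  finally show ?thesis .
qed

(* ---- from W12.thy ---- *)
lemma mat_pow_one: "mat_pow (mat 1) n = mat 1"
  by (induction n) simp_all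

lemma mat_pow_2: "mat_pow g 2 = g ** g"
  by (simp add: numeral_2_eq_2)

lemma mat_pow_3: "mat_pow g 3 = g ** (g ** g)"
  by (simp add: numeral_3_eq_3)

lemma CH: "det (g::imat2) = 1 \<Longrightarrow> g ** g = mat (trace g) ** g - mat 1"
  by (simp add: m2 det_2 trace2 algebra_simps)

lemma trace_smat: "trace (mat c ** (A::imat2)) = c * trace A"
  by (simp add: trace2 m2 algebra_simps)

lemma mat_scalar_comm: "(A::imat2) ** mat c = mat c ** A"
  by (simp add: m2 algebra_simps)

lemma trace_rec:
  assumes g: "det g = 1"
  shows "trace (mat_pow g (Suc (Suc n))) = trace g * trace (mat_pow g (Suc n)) - trace (mat_pow g n)"
proof -
  have "mat_pow g (Suc (Suc n)) = mat_pow g n ** (g ** g)"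
    using mat_pow_add[of g n 2] by (simp add: mat_pow_2)
  also have "\<dots> = mat_pow g n ** (mat (trace g) ** g - mat 1)" using CH[OF g] by simp
  also have "\<dots> = mat_pow g n ** mat (trace g) ** g - mat_pow g n"
    by (simp add: mm_sub_l matrix_mul_assoc)
  also have "mat_pow g n ** mat (trace g) ** g = mat (trace g) ** (mat_pow g n ** g)"
    by (simp only: mat_scalar_comm matrix_mul_assoc)
  also have "mat_pow g n ** g = mat_pow g (Suc n)" by (rule mat_pow_Suc'[symmetric])
  finally show ?thesis by (simp add: trace_sub trace_smat)
qed

lemma trace_mat1: "trace (mat 1 :: imat2) = 2"
  by (simp add: trace2 mat_def)

lemma hyper_grow:
  assumes g: "det g = 1" and t: "\<bar>trace g\<bar> \<ge> 3"
  shows "\<bar>trace (mat_pow g n)\<bar> < \<bar>trace (mat_pow g (Suc n))\<bar>"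
proof (induction n)
  case 0 then show ?case using t by (simp add: trace_mat1)
next
  case (Suc n)
  let ?a = "trace (mat_pow g n)" and ?b = "trace (mat_pow g (Suc n))" and ?t = "trace g"
  have "3 * \<bar>?b\<bar> \<le> \<bar>?t\<bar> * \<bar>?b\<bar>" using t by (simp add: mult_right_mono)
  moreover have "\<bar>?t * ?b\<bar> - \<bar>?a\<bar> \<le> \<bar>?t * ?b - ?a\<bar>" by linarith
  ultimately have "\<bar>trace (mat_pow g (Suc (Suc n)))\<bar> \<ge> 3 * \<bar>?b\<bar> - \<bar>?a\<bar>"
    using trace_rec[OF g, of n] by (simp add: abs_mult)
  then show ?case using Suc by linarith
qed

lemma hyper_trace:
  assumes g: "det g = 1" and t: "\<bar>trace g\<bar> \<ge> 3" and n: "n \<ge> 1"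
  shows "\<bar>trace (mat_pow g n)\<bar> > 2"
proof -
  have ge: "\<bar>trace (mat_pow g j)\<bar> \<ge> 2" for j
  proof (induction j)
    case 0 then show ?case by (simp add: trace_mat1)
  next
    case (Suc j) then show ?case using hyper_grow[OF g t, of j] by linarith
  qed
  obtain j where nj: "n = Suc j" using n by (cases n) auto
  have "\<bar>trace (mat_pow g (Suc j))\<bar> > 2" using hyper_grow[OF g t, of j] ge[of j] by linarith
  then show ?thesis using nj by simp
qed

lemma mk2_eta: "g = mk2 (g$1$1) (g$1$2) (g$2$1) (g$2$2)"
  by (simp add: vec_eq_iff forall_2)

lemma mk2_sq: "mat_pow (mk2 a b c d) 2 =
  mk2 ((a+d)*a - (a*d - b*c)) ((a+d)*b) ((a+d)*c) ((a+d)*d - (a*d - b*c))"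
  unfolding mat_pow_2 by (simp add: m2 algebra_simps)

lemma mk2_cube: "mat_pow (mk2 a b c d) 3 =
  mk2 (((a+d)*(a+d) - (a*d - b*c))*a - (a+d)*(a*d - b*c)) (((a+d)*(a+d) - (a*d - b*c))*b)
      (((a+d)*(a+d) - (a*d - b*c))*c) (((a+d)*(a+d) - (a*d - b*c))*d - (a+d)*(a*d - b*c))"
  unfolding mat_pow_3 by (simp add: m2 algebra_simps)

lemma sq_t0: "(a::int) * d - b * c = 1 \<Longrightarrow> a + d = 0 \<Longrightarrow> mat_pow (mk2 a b c d) 2 = mat (-1)"
  unfolding mk2_sq by (simp add: m2)

lemma cube_t1: "(a::int) * d - b * c = 1 \<Longrightarrow> a + d = 1 \<Longrightarrow> mat_pow (mk2 a b c d) 3 = mat (-1)"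
  unfolding mk2_cube by (simp add: m2)

lemma cube_tm1: "(a::int) * d - b * c = 1 \<Longrightarrow> a + d = -1 \<Longrightarrow> mat_pow (mk2 a b c d) 3 = mat 1"
  unfolding mk2_cube by (simp add: m2)

lemma ellip_12:
  assumes g: "det g = 1" and t: "\<bar>trace g\<bar> \<le> 1"
  shows "mat_pow g 12 = mat 1"
proof -
  have tc: "trace g = 0 \<or> trace g = 1 \<or> trace g = -1" using t by linarith
  have d: "g$1$1 * g$2$2 - g$1$2 * g$2$1 = 1" using g by (simp add: det_2)
  have mm: "mat (-1) ** mat (-1) = (mat 1 :: imat2)" by (simp add: m2)
  show ?thesis
  proof (cases "trace g = 0")
    case True
    then have tr: "g$1$1 + g$2$2 = 0" by (simp add: trace2)
    have "mat_pow g 2 = mat (-1)" using sq_t0[OF d tr] mk2_eta[of g] by simp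
    then have "mat_pow g 4 = mat 1" using mat_pow_add[of g 2 2] mm by simp
    then have "mat_pow (mat_pow g 4) 3 = mat 1" by (simp add: mat_pow_one)
    then show ?thesis by (simp add: mat_pow_mult)
  next
    case False
    then have tr: "g$1$1 + g$2$2 = 1 \<or> g$1$1 + g$2$2 = -1" using tc by (simp add: trace2)
    then show ?thesis
    proof
      assume tr1: "g$1$1 + g$2$2 = 1"
      have "mat_pow g 3 = mat (-1)" using cube_t1[OF d tr1] mk2_eta[of g] by simp
      then have "mat_pow g 6 = mat 1" using mat_pow_add[of g 3 3] mm by simp
      then have "mat_pow (mat_pow g 6) 2 = mat 1" by (simp add: mat_pow_one)
      then show ?thesis by (simp add: mat_pow_mult)
    next
      assume tr1: "g$1$1 + g$2$2 = -1"
      have "mat_pow g 3 = mat 1" using cube_tm1[OF d tr1] mk2_eta[of g] by simp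
      then have "mat_pow (mat_pow g 3) 4 = mat 1" by (simp add: mat_pow_one)
      then show ?thesis by (simp add: mat_pow_mult)
    qed
  qed
qed

lemma unipotent_pow_mk2:
  assumes d: "(a::int) * e - b * c = 1" and t: "a + e = 2"
  shows "mat_pow (mk2 a b c e) j = mk2 (1 + int j * (a - 1)) (int j * b) (int j * c) (1 + int j * (e - 1))"
proof (induction j)
  case 0 then show ?case by (simp add: m2)
next
  case (Suc j)
  let ?j = "int j"
  have k1: "a*a - a + b*c = a - 1"
  proof -
    have "a*a - a + b*c - (a - 1) = a*(a + e - 2) - (a*e - b*c - 1)" by (simp add: algebra_simps)
    then show ?thesis using d t by simp
  qed
  have k2: "b*c + e*e - e = e - 1"
  proof -
    have "b*c + e*e - e - (e - 1) = e*(a + e - 2) - (a*e - b*c - 1)" by (simp add: algebra_simps)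
    then show ?thesis using d t by simp
  qed
  have e11: "a * (1 + ?j * (a - 1)) + b * (?j * c) = 1 + (?j + 1) * (a - 1)"
  proof -
    have "a * (1 + ?j * (a - 1)) + b * (?j * c) = a + ?j * (a*a - a + b*c)" by (simp add: algebra_simps)
    also have "\<dots> = a + ?j * (a - 1)" using k1 by simp
    finally show ?thesis by (simp add: algebra_simps)
  qed
  have e12: "a * (?j * b) + b * (1 + ?j * (e - 1)) = (?j + 1) * b"
  proof -
    have "a * (?j * b) + b * (1 + ?j * (e - 1)) = b + ?j * b * (a + e - 1)" by (simp add: algebra_simps)
    then show ?thesis using t by (simp add: algebra_simps)
  qed
  have e21: "c * (1 + ?j * (a - 1)) + e * (?j * c) = (?j + 1) * c"
  proof -
    have "c * (1 + ?j * (a - 1)) + e * (?j * c) = c + ?j * c * (a + e - 1)" by (simp add: algebra_simps)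
    then show ?thesis using t by (simp add: algebra_simps)
  qed
  have e22: "c * (?j * b) + e * (1 + ?j * (e - 1)) = 1 + (?j + 1) * (e - 1)"
  proof -
    have "c * (?j * b) + e * (1 + ?j * (e - 1)) = e + ?j * (b*c + e*e - e)" by (simp add: algebra_simps)
    also have "\<dots> = e + ?j * (e - 1)" using k2 by simp
    finally show ?thesis by (simp add: algebra_simps)
  qed
  have "mat_pow (mk2 a b c e) (Suc j) = mk2 a b c e ** mk2 (1 + ?j * (a - 1)) (?j * b) (?j * c) (1 + ?j * (e - 1))"
    using Suc by simp
  also have "\<dots> = mk2 (1 + (?j + 1) * (a - 1)) ((?j + 1) * b) ((?j + 1) * c) (1 + (?j + 1) * (e - 1))"
    using e11 e12 e21 e22 by (simp add: m2)
  also have "(?j + 1) = int (Suc j)" by simp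
  finally show ?case .
qed

lemma unipotent:
  assumes d: "det M = 1" and t: "trace M = 2" and n: "n > 0" and p: "mat_pow M n = mat 1"
  shows "M = mat 1"
proof -
  have d': "M$1$1 * M$2$2 - M$1$2 * M$2$1 = 1" using d by (simp add: det_2)
  have t': "M$1$1 + M$2$2 = 2" using t by (simp add: trace2)
  have "mk2 (1 + int n * (M$1$1 - 1)) (int n * M$1$2) (int n * M$2$1) (1 + int n * (M$2$2 - 1)) = mat 1"
    using unipotent_pow_mk2[OF d' t', of n] p mk2_eta[of M] by simp
  then have "int n * (M$1$1 - 1) = 0" "int n * M$1$2 = 0" "int n * M$2$1 = 0" "int n * (M$2$2 - 1) = 0"
    by (simp_all add: m2)
  then have "M$1$1 = 1" "M$1$2 = 0" "M$2$1 = 0" "M$2$2 = 1" using n by simp_all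
  then show ?thesis by (simp add: m2)
qed

lemma trace2_pow_id:
  assumes g: "det g = 1" and t: "trace g \<noteq> 2" "trace g \<noteq> -2" and d: "d \<ge> 1"
    and td: "trace (mat_pow g d) = 2"
  shows "mat_pow g d = mat 1"
proof (cases "\<bar>trace g\<bar> \<ge> 3")
  case True then show ?thesis using hyper_trace[OF g True d] td by simp
next
  case False
  then have "\<bar>trace g\<bar> \<le> 1" using t by linarith
  then have "mat_pow g 12 = mat 1" using ellip_12[OF g] by simp
  then have "mat_pow (mat_pow g d) 12 = mat 1"
  proof -
    have "mat_pow (mat_pow g d) 12 = mat_pow (mat_pow g 12) d" by (simp add: mat_pow_mult mult.commute)
    then show ?thesis using \<open>mat_pow g 12 = mat 1\<close> by (simp add: mat_pow_one)
  qed
  then show ?thesis using unipotent[OF det_mat_pow[OF g] td, of 12] by simp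
qed

(* ---- from W13.thy ---- *)
lemma det_ne_from_trace:
  assumes g: "det g = 1" and t: "trace g \<noteq> 2" "trace g \<noteq> -2" and gk: "mat_pow g k \<noteq> mat 1"
    and dk: "d dvd k" and k0: "k > 0"
  shows "det (mat 1 - mat_pow g d) \<noteq> 0"
proof
  assume "det (mat 1 - mat_pow g d) = 0"
  then have tr: "trace (mat_pow g d) = 2" using det_one_minus[OF det_mat_pow[OF g]] by simp
  have d1: "d \<ge> 1" using dk k0 by (cases "d = 0") auto
  have "mat_pow g d = mat 1" using trace2_pow_id[OF g t d1 tr] .
  moreover obtain c where "k = d * c" using dk by (auto simp: dvd_def)
  ultimately have "mat_pow g k = mat 1" by (simp add: mat_pow_mult[symmetric] mat_pow_one)
  then show False using gk by simp
qed

theorem case1: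
  assumes g: "det g = 1" and k1: "k \<ge> 1" and t: "trace g \<noteq> 2" "trace g \<noteq> -2"
    and gk: "mat_pow g k \<noteq> mat 1"
  shows "real (c_k k g) = (1 / real k) *
     (\<Sum>d\<in>{d. d dvd k}. real (totient (k div d)) * \<bar>real_of_int (trace (mat_pow g d)) - 2\<bar>)"
proof -
  obtain m where k: "k = Suc m" using k1 by (cases k) auto
  have k0: "k > 0" using k by simp
  have dnz: "det (mat 1 - mat_pow g d) \<noteq> 0" if "d dvd k" for d
    using det_ne_from_trace[OF g t gk that k0] .
  have dA: "det (mat 1 - mat_pow g k) \<noteq> 0" using dnz by simp
  define h where "h = (\<lambda>d. nat \<bar>det (mat 1 - mat_pow g d)\<bar>)"
  have "k * c_k k g = (\<Sum>j<k. card (cls UNIV (latt (mat 1 - mat_pow g k)) ` Fx g k (gcd j k)))"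
    using ocount2_burnside[OF g k dA] ck_reduce[OF g k] by simp
  also have "\<dots> = (\<Sum>j<k. h (gcd j k))"
    by (rule sum.cong) (simp_all add: h_def card_Fx[OF _ k0 dnz dA])
  also have "\<dots> = (\<Sum>d\<in>{d. d dvd k}. of_nat (totient (k div d)) * h d)" by (rule gcd_sum[OF k0])
  finally have e: "k * c_k k g = (\<Sum>d\<in>{d. d dvd k}. totient (k div d) * h d)" by simp
  have hr: "real (h d) = \<bar>real_of_int (trace (mat_pow g d)) - 2\<bar>" for d
  proof -
    have "real (h d) = real_of_int \<bar>det (mat 1 - mat_pow g d)\<bar>" by (simp add: h_def)
    also have "\<dots> = \<bar>real_of_int (trace (mat_pow g d)) - 2\<bar>"
      using det_one_minus[OF det_mat_pow[OF g, of d]] by simp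
    finally show ?thesis .
  qed
  have "real k * real (c_k k g) = (\<Sum>d\<in>{d. d dvd k}. real (totient (k div d)) * \<bar>real_of_int (trace (mat_pow g d)) - 2\<bar>)"
    using arg_cong[OF e, of real] by (simp add: hr)
  then show ?thesis using k0 by (simp add: field_simps)
qed

lemma ocount2_zero:
  "ocount2 (mat 1 - mat 1) B = 1"
proof -
  have L: "latt (mat 1 - mat 1) = {0}" by (auto simp: latt_def m2)
  have T: "torsQ UNIV {0::int^2} (*s) = {cls UNIV {0} 0}"
  proof
    show "torsQ UNIV {0::int^2} (*s) \<subseteq> {cls UNIV {0} 0}"
    proof
      fix C assume "C \<in> torsQ UNIV {0::int^2} (*s)"
      then obtain v and n :: int where "C = cls UNIV {0} v" "n > 0" "n *s v = 0" by (auto simp: torsQ_def)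
      then have "v = 0" by (simp add: vec_eq_iff)
      then show "C \<in> {cls UNIV {0} 0}" using \<open>C = cls UNIV {0} v\<close> by simp
    qed
    show "{cls UNIV {0} 0} \<subseteq> torsQ UNIV {0::int^2} (*s)"
      unfolding torsQ_def by (auto intro!: exI[of _ "0::int^2"] exI[of _ "1::int"])
  qed
  show ?thesis unfolding ocount2_def ocount_def L T by simp
qed

theorem case2:
  assumes g: "det g = 1" and k1: "k \<ge> 1" and gk: "mat_pow g k = mat 1"
  shows "c_k k g = 1"
proof -
  obtain m where k: "k = Suc m" using k1 by (cases k) auto
  show ?thesis using ck_reduce[OF g k] gk ocount2_zero by simp
qed

lemma mat_pow_conj2:
  assumes "P ** Q = mat 1" "Q ** P = mat 1"
  shows "mat_pow (P ** h ** Q) n = P ** mat_pow h n ** Q"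
  using mat_pow_conj[OF assms(2), of h n] assms(1) by (cases "n = 0") auto

lemma ck_conj:
  assumes P: "P \<in> SL2Z" and PQ: "P ** Q = mat 1" and g: "g = P ** h ** Q" and h: "det h = 1"
    and k: "k = Suc m"
  shows "c_k k g = ocount2 (mat 1 - mat_pow h k) (mat_pow h m)"
proof -
  have dP: "det P = 1" using P by (simp add: SL2Z_def)
  have QP: "Q ** P = mat 1"
  proof -
    have "adj2 P ** (P ** Q) = adj2 P" using PQ by simp
    moreover have "adj2 P ** (P ** Q) = Q" using adj2_left dP by (simp add: matrix_mul_assoc)
    ultimately have "Q = adj2 P" by simp
    then show ?thesis using adj2_left dP by simp
  qed
  have dg: "det g = 1"
  proof -
    have "det g * det (mat 1 :: imat2) = det P * det h * det Q" using g by (simp add: det_mul)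
    moreover have "det P * det Q = 1" using PQ det_mul[of P Q] by simp
    ultimately show ?thesis using h by simp
  qed
  have pw: "mat_pow g n = P ** mat_pow h n ** Q" for n using mat_pow_conj2[OF PQ QP] g by simp
  have A: "mat 1 - mat_pow g k = P ** (mat 1 - mat_pow h k) ** Q"
    using pw[of k] PQ by (simp add: mm_sub_l mm_sub_r)
  have "c_k k g = ocount2 (P ** (mat 1 - mat_pow h k) ** Q) (P ** mat_pow h m ** Q)"
    using ck_reduce[OF dg k] A pw[of m] by simp
  also have "\<dots> = ocount2 (mat 1 - mat_pow h k) (mat_pow h m)"
  proof (rule ocount2_conj[OF _ _ _ PQ QP])
    show "mat_pow h m ** adj2 (mat_pow h m) = mat 1" using adj2_right det_mat_pow[OF h] by simp
    show "adj2 (mat_pow h m) ** mat_pow h m = mat 1" using adj2_left det_mat_pow[OF h] by simp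
    show "(mat 1 - mat_pow h k) ** mat_pow h m = mat_pow h m ** (mat 1 - mat_pow h k)"
      by (simp add: mm_sub_l mm_sub_r mat_pow_comm)
  qed
  finally show ?thesis .
qed

(* ---- from W14.thy ---- *)
lemma T_pow_mk2: "T_pow a = mk2 1 a 0 1"
  by (simp add: T_pow_def vec_eq_iff forall_2)

lemma T0: "T_pow 0 = mat 1" by (simp add: T_pow_mk2 m2)

lemma T_mult: "T_pow a ** T_pow b = T_pow (a + b)"
  by (simp add: T_pow_mk2 m2)

lemma det_T: "det (T_pow a) = 1" by (simp add: T_pow_mk2 det_2)
lemma det_negT: "det (- T_pow a) = 1" by (simp add: T_pow_mk2 det_2)

lemma mat_pow_T: "mat_pow (T_pow a) n = T_pow (a * int n)"
proof (induction n)
  case 0 then show ?case by (simp add: T_pow_mk2 m2)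
next
  case (Suc n) then show ?case by (simp add: T_mult algebra_simps)
qed

lemma mat_pow_negT: "mat_pow (- T_pow a) n = (if even n then T_pow (a * int n) else - T_pow (a * int n))"
proof (induction n)
  case 0 then show ?case by (simp add: T_pow_mk2 m2)
next
  case (Suc n) then show ?case by (simp add: T_pow_mk2 m2 algebra_simps)
qed

lemma latt_A1: "v \<in> latt (mat 1 - T_pow c) \<longleftrightarrow> v$2 = 0 \<and> c dvd v$1"
proof
  assume "v \<in> latt (mat 1 - T_pow c)"
  then obtain u where "v = (mat 1 - T_pow c) *v u" by (auto simp: latt_def)
  then have "v$1 = c * (- u$2)" "v$2 = 0" by (simp_all add: T_pow_mk2 m2)
  then show "v$2 = 0 \<and> c dvd v$1" by simp
next
  assume h: "v$2 = 0 \<and> c dvd v$1"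
  then obtain q where q: "v$1 = c * q" by (auto simp: dvd_def)
  have "v = (mat 1 - T_pow c) *v v2 0 (- q)" using h q by (simp add: T_pow_mk2 m2 v2_def)
  then show "v \<in> latt (mat 1 - T_pow c)" by (auto simp: latt_def)
qed

lemma tors_A1:
  assumes c: "c \<noteq> 0"
  shows "torsQ UNIV (latt (mat 1 - T_pow c)) (*s) = cls UNIV (latt (mat 1 - T_pow c)) ` {v. v$2 = 0}"
proof
  show "torsQ UNIV (latt (mat 1 - T_pow c)) (*s) \<subseteq> cls UNIV (latt (mat 1 - T_pow c)) ` {v. v$2 = 0}"
  proof
    fix C assume "C \<in> torsQ UNIV (latt (mat 1 - T_pow c)) (*s)"
    then obtain v and n :: int where v: "C = cls UNIV (latt (mat 1 - T_pow c)) v" "n > 0"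
      "n *s v \<in> latt (mat 1 - T_pow c)" by (auto simp: torsQ_def)
    then have "n * v$2 = 0" using latt_A1 by simp
    then have "v$2 = 0" using v(2) by simp
    then show "C \<in> cls UNIV (latt (mat 1 - T_pow c)) ` {v. v$2 = 0}" using v(1) by simp
  qed
  show "cls UNIV (latt (mat 1 - T_pow c)) ` {v. v$2 = 0} \<subseteq> torsQ UNIV (latt (mat 1 - T_pow c)) (*s)"
  proof
    fix C assume "C \<in> cls UNIV (latt (mat 1 - T_pow c)) ` {v. v$2 = 0}"
    then obtain v where v: "C = cls UNIV (latt (mat 1 - T_pow c)) v" "v$2 = 0" by auto
    have "\<bar>c\<bar> *s v \<in> latt (mat 1 - T_pow c)" using v(2) latt_A1 by simp
    moreover have "\<bar>c\<bar> > 0" using c by simp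
    ultimately show "C \<in> torsQ UNIV (latt (mat 1 - T_pow c)) (*s)" using v(1) unfolding torsQ_def by blast
  qed
qed

lemma card_A1:
  assumes c: "c \<noteq> 0"
  shows "card (cls UNIV (latt (mat 1 - T_pow c)) ` {v. v$2 = 0}) = nat \<bar>c\<bar>"
proof -
  define R where "R = (\<lambda>r. v2 r 0) ` {0..<\<bar>c\<bar>}"
  have "card R = nat \<bar>c\<bar>" unfolding R_def by (subst card_image) (auto simp: inj_on_def)
  moreover have "card (cls UNIV (latt (mat 1 - T_pow c)) ` {v. v$2 = 0}) = card R"
  proof (rule card_cls_repr[OF subgrp_latt])
    show "R \<subseteq> {v. v$2 = 0}" by (auto simp: R_def)
  next
    fix y :: "int^2" assume y: "y \<in> {v. v$2 = 0}"
    have d1: "\<bar>c\<bar> dvd y$1 - y$1 mod \<bar>c\<bar>" by (simp add: minus_mod_eq_mult_div)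
    have d2: "c dvd \<bar>c\<bar>" by simp
    have "c dvd y$1 - y$1 mod \<bar>c\<bar>" by (rule dvd_trans[OF d2 d1])
    then have "y - v2 (y$1 mod \<bar>c\<bar>) 0 \<in> latt (mat 1 - T_pow c)"
      using y by (simp add: latt_A1)
    moreover have "v2 (y$1 mod \<bar>c\<bar>) 0 \<in> R" using c by (simp add: R_def)
    ultimately show "\<exists>r\<in>R. y - r \<in> latt (mat 1 - T_pow c)" by blast
  next
    fix r r' assume rr: "r \<in> R" "r' \<in> R" "r - r' \<in> latt (mat 1 - T_pow c)"
    then obtain x x' where x: "r = v2 x 0" "r' = v2 x' 0" "0 \<le> x" "x < \<bar>c\<bar>" "0 \<le> x'" "x' < \<bar>c\<bar>"
      by (auto simp: R_def)
    have dv: "c dvd x - x'" using rr(3) x latt_A1 by simp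
    have lt: "\<bar>x - x'\<bar> < \<bar>c\<bar>" using x by linarith
    have "x - x' = 0"
    proof (rule ccontr)
      assume "x - x' \<noteq> 0"
      then have "\<bar>c\<bar> \<le> \<bar>x - x'\<bar>" by (rule dvd_imp_le_int[OF _ dv])
      then show False using lt by simp
    qed
    then show "r = r'" using x by simp
  qed
  ultimately show ?thesis by simp
qed

lemma ocount_trivial:
  assumes "\<And>C. C \<in> torsQ V I sm \<Longrightarrow> S ` C = C"
  shows "ocount V I sm S = card (torsQ V I sm)"
proof -
  have "orbQ S C = {C}" if "C \<in> torsQ V I sm" for C
  proof -
    have "(S ^^ n) ` C = C" for n
    proof (induction n)
      case 0 show ?case by (simp add: id_def)
    next
      case (Suc n)
      have "(S ^^ Suc n) ` C = S ` ((S ^^ n) ` C)" by (simp add: image_comp)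
      then show ?case using Suc assms[OF that] by simp
    qed
    then show ?thesis by (auto simp: orbQ_def)
  qed
  then have "orbQ S ` torsQ V I sm = (\<lambda>C. {C}) ` torsQ V I sm" by auto
  then show ?thesis unfolding ocount_def by (simp add: card_image inj_on_def)
qed

lemma qsys_T:
  "qsys UNIV (latt (mat 1 - T_pow c)) (*s) (\<lambda>x. T_pow b *v x)"
  by (rule qsys2[where B' = "T_pow (- b)"]) (simp_all add: T_mult mm_sub_l mm_sub_r add.commute T0)

lemma qsys_negT:
  "qsys UNIV (latt (mat 1 - T_pow c)) (*s) (\<lambda>x. (- T_pow b) *v x)"
  by (rule qsys2[where B' = "- T_pow (- b)"]) (simp_all add: T_pow_mk2 m2 algebra_simps)

(* ---- from W15.thy ---- *)
lemma T_fix: "v$2 = 0 \<Longrightarrow> T_pow b *v v = v"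
  by (simp add: T_pow_mk2 m2)

lemma negT_fix: "v$2 = 0 \<Longrightarrow> (- T_pow b) *v v = - v"
  by (simp add: T_pow_mk2 m2)

lemma caseT:
  assumes a: "a \<noteq> 0" and k: "k = Suc m"
  shows "ocount2 (mat 1 - mat_pow (T_pow a) k) (mat_pow (T_pow a) m) = nat \<bar>a\<bar> * k"
proof -
  define c where "c = a * int k"
  have c0: "c \<noteq> 0" using a k by (simp add: c_def)
  let ?L = "latt (mat 1 - T_pow c)"
  have q: "qsys UNIV ?L (*s) (\<lambda>x. T_pow (a * int m) *v x)" by (rule qsys_T)
  have "ocount UNIV ?L (*s) (\<lambda>x. T_pow (a * int m) *v x) = card (torsQ UNIV ?L (*s))"
  proof (rule ocount_trivial)
    fix C assume "C \<in> torsQ UNIV ?L (*s)"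
    then obtain v where v: "C = cls UNIV ?L v" "v$2 = 0" using tors_A1[OF c0] by auto
    show "(\<lambda>x. T_pow (a * int m) *v x) ` C = C"
      using qsys_S_cls[OF q UNIV_I, of v] v T_fix[OF v(2)] by simp
  qed
  also have "\<dots> = nat \<bar>c\<bar>" using tors_A1[OF c0] card_A1[OF c0] by simp
  also have "\<dots> = nat \<bar>a\<bar> * k" by (simp add: c_def abs_mult nat_mult_distrib)
  finally show ?thesis by (simp add: ocount2_def mat_pow_T c_def)
qed

lemma caseNegT_odd:
  assumes k: "k = Suc m" and odd: "odd k"
  shows "ocount2 (mat 1 - mat_pow (- T_pow a) k) (mat_pow (- T_pow a) m) = 4"
proof -
  have me: "even m" using k odd by simp
  then obtain h2 where h2: "m = 2 * h2" by (auto elim: evenE)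
  define A where "A = mat 1 - (- T_pow (a * int k))"
  define B where "B = T_pow (a * int m)"
  have AB: "mat 1 - mat_pow (- T_pow a) k = A" "mat_pow (- T_pow a) m = B"
    using odd me by (simp_all add: mat_pow_negT A_def B_def)
  have dA: "det A = 4" by (simp add: A_def T_pow_mk2 m2 det_2)
  have q: "qsys UNIV (latt A) (*s) (\<lambda>x. B *v x)"
    by (rule qsys2[where B' = "T_pow (- (a * int m))"])
       (simp_all add: A_def B_def T_mult T0 T_pow_mk2 m2 algebra_simps)
  have "ocount UNIV (latt A) (*s) (\<lambda>x. B *v x) = card (torsQ UNIV (latt A) (*s))"
  proof (rule ocount_trivial)
    fix C assume "C \<in> torsQ UNIV (latt A) (*s)"
    then obtain v where v: "C = cls UNIV (latt A) v" using tors_all[of A] dA by auto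
    have "B *v v - v = A *v v2 (a * int h2 * v$2) 0"
      using h2 by (simp add: A_def B_def T_pow_mk2 m2 v2_def algebra_simps)
    then have "B *v v - v \<in> latt A" by (auto simp: latt_def)
    then have "cls UNIV (latt A) (B *v v) = cls UNIV (latt A) v"
      using cls_UNIV_eq_iff[OF subgrp_latt] by blast
    then show "(\<lambda>x. B *v x) ` C = C" using qsys_S_cls[OF q UNIV_I, of v] v by simp
  qed
  also have "\<dots> = 4" using tors_all[of A] card_quot[of A] dA by simp
  finally show ?thesis using AB by (simp add: ocount2_def)
qed

(* ---- from W16.thy ---- *)
lemma card_fix2:
  assumes c0: "c \<noteq> 0" and ce: "even c"
  shows "card (cls UNIV (latt (mat 1 - T_pow c)) ` {v. v$2 = 0 \<and> c dvd 2 * v$1}) = 2"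
proof -
  have "even \<bar>c\<bar>" using ce by (simp add: abs_if)
  then obtain h where h: "\<bar>c\<bar> = 2 * h" by (rule evenE)
  have h0: "h > 0" using h c0 by simp
  let ?L = "latt (mat 1 - T_pow c)"
  define R where "R = {v2 0 0, v2 h 0}"
  have "card R = 2" using h0 by (simp add: R_def)
  moreover have "card (cls UNIV ?L ` {v. v$2 = 0 \<and> c dvd 2 * v$1}) = card R"
  proof (rule card_cls_repr[OF subgrp_latt])
    show "R \<subseteq> {v. v$2 = 0 \<and> c dvd 2 * v$1}"
    proof -
      have "\<bar>c\<bar> dvd 2 * h" using h by simp
      then have "c dvd 2 * h" by (simp only: abs_dvd_iff)
      then show ?thesis by (simp add: R_def)
    qed
  next
    fix y :: "int^2" assume y: "y \<in> {v. v$2 = 0 \<and> c dvd 2 * v$1}"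
    then have "\<bar>c\<bar> dvd 2 * y$1" by (simp only: mem_Collect_eq abs_dvd_iff)
    then have "2 * h dvd 2 * y$1" using h by simp
    then have "h dvd y$1" using h0 by (simp add: mult_dvd_mono)
    then obtain q where q: "y$1 = h * q" by (auto simp: dvd_def)
    show "\<exists>r\<in>R. y - r \<in> ?L"
    proof (cases "even q")
      case True
      then obtain q2 where "q = 2 * q2" by (auto elim: evenE)
      then have "y$1 = \<bar>c\<bar> * q2" using q h by simp
      then have "c dvd y$1" by (metis abs_dvd_iff dvd_triv_left)
      then have "y - v2 0 0 \<in> ?L" using y by (simp add: latt_A1)
      then show ?thesis by (auto simp: R_def)
    next
      case False
      then obtain q2 where "q = 2 * q2 + 1" by (auto elim: oddE)
      then have "y$1 - h = \<bar>c\<bar> * q2" using q h by (simp add: algebra_simps)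
      then have "c dvd y$1 - h" by (metis abs_dvd_iff dvd_triv_left)
      then have "y - v2 h 0 \<in> ?L" using y by (simp add: latt_A1)
      then show ?thesis by (auto simp: R_def)
    qed
  next
    fix r r' assume rr: "r \<in> R" "r' \<in> R" "r - r' \<in> ?L"
    have nd: "\<not> c dvd h" "\<not> c dvd - h"
    proof -
      have lt: "\<bar>h\<bar> < \<bar>c\<bar>" using h h0 by simp
      show "\<not> c dvd h"
      proof
        assume "c dvd h"
        then have "\<bar>c\<bar> \<le> \<bar>h\<bar>" using dvd_imp_le_int[of h c] h0 by simp
        then show False using lt by simp
      qed
      show "\<not> c dvd - h"
      proof
        assume "c dvd - h"
        then have "c dvd h" by simp
        then have "\<bar>c\<bar> \<le> \<bar>h\<bar>" using dvd_imp_le_int[of h c] h0 by simp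
        then show False using lt by simp
      qed
    qed
    show "r = r'" using rr nd by (auto simp: R_def latt_A1)
  qed
  ultimately show ?thesis by simp
qed

lemma caseNegT_even:
  assumes a: "a \<noteq> 0" and k: "k = Suc m" and ev: "even k"
  shows "2 * ocount2 (mat 1 - mat_pow (- T_pow a) k) (mat_pow (- T_pow a) m) = nat \<bar>a\<bar> * k + 2"
proof -
  have mo: "odd m" using k ev by simp
  define c where "c = a * int k"
  have c0: "c \<noteq> 0" using a k by (simp add: c_def)
  have ce: "even c" using ev by (simp add: c_def)
  define L where "L = latt (mat 1 - T_pow c)"
  define S where "S = (\<lambda>x. (- T_pow (a * int m)) *v x)"
  define f where "f = (\<lambda>C. S ` C)"
  define X where "X = cls UNIV L ` {v. v$2 = 0}"
  have AB: "mat 1 - mat_pow (- T_pow a) k = mat 1 - T_pow c" "mat_pow (- T_pow a) m = - T_pow (a * int m)"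
    using ev mo by (simp_all add: mat_pow_negT c_def)
  have q: "qsys UNIV L (*s) S" unfolding L_def S_def by (rule qsys_negT)
  have sg: "subgrp L" unfolding L_def by (rule subgrp_latt)
  have fcls: "f (cls UNIV L v) = cls UNIV L (- v)" if "v$2 = 0" for v
    using qsys_S_cls[OF q UNIV_I, of v] negT_fix[OF that] by (simp add: f_def S_def)
  have cX: "card X = nat \<bar>c\<bar>" using card_A1[OF c0] by (simp add: X_def L_def)
  have fin: "finite X" using cX c0 card.infinite by force
  have fX: "f C \<in> X" if CX: "C \<in> X" for C
  proof -
    obtain v where v: "C = cls UNIV L v" "v$2 = 0" using CX unfolding X_def by blast
    then show ?thesis using fcls[OF v(2)] by (simp add: X_def)
  qed
  have per: "(f ^^ 2) C = C" if CX: "C \<in> X" for C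
  proof -
    obtain v where v: "C = cls UNIV L v" "v$2 = 0" using CX unfolding X_def by blast
    have "(-v)$2 = 0" using v by simp
    then show ?thesis using v fcls by (simp add: numeral_2_eq_2)
  qed
  have B: "2 * card ((\<lambda>C. {(f ^^ n) C | n. True}) ` X) = (\<Sum>j<2. card {C\<in>X. (f ^^ j) C = C})"
    using burnside_cyc[OF fin fX per] by simp
  also have "\<dots> = card X + card {C\<in>X. f C = C}" by (simp add: numeral_2_eq_2)
  also have "{C\<in>X. f C = C} = cls UNIV L ` {v. v$2 = 0 \<and> c dvd 2 * v$1}"
  proof
    show "{C\<in>X. f C = C} \<subseteq> cls UNIV L ` {v. v$2 = 0 \<and> c dvd 2 * v$1}"
    proof
      fix C assume C: "C \<in> {C\<in>X. f C = C}"
      then obtain v where v: "C = cls UNIV L v" "v$2 = 0" unfolding X_def by blast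
      then have "cls UNIV L (- v) = cls UNIV L v" using C fcls by simp
      then have "- v - v \<in> L" using cls_UNIV_eq_iff[OF sg] by blast
      then have "c dvd - (2 * v$1)" by (simp add: L_def latt_A1)
      then have "c dvd 2 * v$1" by simp
      then show "C \<in> cls UNIV L ` {v. v$2 = 0 \<and> c dvd 2 * v$1}" using v by blast
    qed
    show "cls UNIV L ` {v. v$2 = 0 \<and> c dvd 2 * v$1} \<subseteq> {C\<in>X. f C = C}"
    proof
      fix C assume "C \<in> cls UNIV L ` {v. v$2 = 0 \<and> c dvd 2 * v$1}"
      then obtain v where v: "C = cls UNIV L v" "v$2 = 0" "c dvd 2 * v$1" by blast
      then have "c dvd - (2 * v$1)" by simp
      then have "- v - v \<in> L" using v by (simp add: L_def latt_A1)
      then have "cls UNIV L (- v) = cls UNIV L v" using cls_UNIV_eq_iff[OF sg] by blast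
      then show "C \<in> {C\<in>X. f C = C}" using v fcls by (simp add: X_def)
    qed
  qed
  finally have e: "2 * card ((\<lambda>C. {(f ^^ n) C | n. True}) ` X) = nat \<bar>c\<bar> + 2"
    using cX card_fix2[OF c0 ce] by (simp add: L_def)
  have oc: "ocount2 (mat 1 - mat_pow (- T_pow a) k) (mat_pow (- T_pow a) m) = card ((\<lambda>C. {(f ^^ n) C | n. True}) ` X)"
    unfolding AB ocount2_def ocount_def tors_A1[OF c0] orbQ_def
    by (simp add: f_def f_pow S_def X_def L_def)
  show ?thesis using e oc by (simp add: c_def abs_mult nat_mult_distrib)
qed

(* ---- from W17.thy ---- *)
theorem theorem3p5:
  fixes g :: imat2 and k :: nat
  assumes "g \<in> SL2Z" and "k \<ge> 1"
  shows "(trace g \<noteq> 2 \<and> trace g \<noteq> -2 \<and> mat_pow g k \<noteq> mat 1 \<longrightarrow>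
           real (c_k k g) = (1 / real k) *
             (\<Sum>d\<in>{d. d dvd k}. real (totient (k div d)) * \<bar>real_of_int (trace (mat_pow g d)) - 2\<bar>))
       \<and> (mat_pow g k = mat 1 \<longrightarrow> c_k k g = 1)
       \<and> (\<forall>m::int. m \<noteq> 0 \<and> conj_SL2Z g (T_pow m) \<longrightarrow> c_k k g = nat \<bar>m\<bar> * k)
       \<and> (\<forall>m::int. m \<noteq> 0 \<and> conj_SL2Z g (- T_pow m) \<and> even k \<longrightarrow>
            real (c_k k g) = real_of_int \<bar>m\<bar> * real k / 2 + 1)
       \<and> (\<forall>m::int. conj_SL2Z g (- T_pow m) \<and> odd k \<longrightarrow> c_k k g = 4)"
proof -
  have g: "det g = 1" using assms(1) by (simp add: SL2Z_def)
  obtain n0 where k: "k = Suc n0" using assms(2) by (cases k) auto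
  have p1: "trace g \<noteq> 2 \<and> trace g \<noteq> -2 \<and> mat_pow g k \<noteq> mat 1 \<longrightarrow>
           real (c_k k g) = (1 / real k) *
             (\<Sum>d\<in>{d. d dvd k}. real (totient (k div d)) * \<bar>real_of_int (trace (mat_pow g d)) - 2\<bar>)"
    using case1[OF g assms(2)] by blast
  have p2: "mat_pow g k = mat 1 \<longrightarrow> c_k k g = 1" using case2[OF g assms(2)] by blast
  have p3: "\<forall>a::int. a \<noteq> 0 \<and> conj_SL2Z g (T_pow a) \<longrightarrow> c_k k g = nat \<bar>a\<bar> * k"
  proof (intro allI impI)
    fix a :: int assume h: "a \<noteq> 0 \<and> conj_SL2Z g (T_pow a)"
    then obtain P Q where PQ: "P \<in> SL2Z" "P ** Q = mat 1" "g = P ** T_pow a ** Q"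
      by (auto simp: conj_SL2Z_def)
    have "c_k k g = ocount2 (mat 1 - mat_pow (T_pow a) k) (mat_pow (T_pow a) n0)"
      by (rule ck_conj[OF PQ det_T k])
    also have "\<dots> = nat \<bar>a\<bar> * k" using caseT h k by simp
    finally show "c_k k g = nat \<bar>a\<bar> * k" .
  qed
  have p4: "\<forall>a::int. a \<noteq> 0 \<and> conj_SL2Z g (- T_pow a) \<and> even k \<longrightarrow>
            real (c_k k g) = real_of_int \<bar>a\<bar> * real k / 2 + 1"
  proof (intro allI impI)
    fix a :: int assume h: "a \<noteq> 0 \<and> conj_SL2Z g (- T_pow a) \<and> even k"
    then obtain P Q where PQ: "P \<in> SL2Z" "P ** Q = mat 1" "g = P ** (- T_pow a) ** Q"
      by (auto simp: conj_SL2Z_def)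
    have "c_k k g = ocount2 (mat 1 - mat_pow (- T_pow a) k) (mat_pow (- T_pow a) n0)"
      by (rule ck_conj[OF PQ det_negT k])
    then have "2 * c_k k g = nat \<bar>a\<bar> * k + 2" using caseNegT_even[of a k n0] h k by simp
    then have "2 * real (c_k k g) = real (nat \<bar>a\<bar>) * real k + 2"
      by (metis of_nat_add of_nat_mult of_nat_numeral)
    then show "real (c_k k g) = real_of_int \<bar>a\<bar> * real k / 2 + 1" by simp
  qed
  have p5: "\<forall>a::int. conj_SL2Z g (- T_pow a) \<and> odd k \<longrightarrow> c_k k g = 4"
  proof (intro allI impI)
    fix a :: int assume h: "conj_SL2Z g (- T_pow a) \<and> odd k"
    then obtain P Q where PQ: "P \<in> SL2Z" "P ** Q = mat 1" "g = P ** (- T_pow a) ** Q"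
      by (auto simp: conj_SL2Z_def)
    have "c_k k g = ocount2 (mat 1 - mat_pow (- T_pow a) k) (mat_pow (- T_pow a) n0)"
      by (rule ck_conj[OF PQ det_negT k])
    then show "c_k k g = 4" using caseNegT_odd[of k n0 a] h k by simp
  qed
  show ?thesis using p1 p2 p3 p4 p5 by blast
qed

end
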